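(* Let $\delta:\mathcal{B}\to B$ be an invariant derivation. Then there exist $c_0\in\mathbb{C}$ and a $\varphi$-invariant derivation $\partial:\mathcal{F}\to C(G)$ such that $\delta(b)=c_0[\mathbb{L},b]+\delta_\partial(b)+\tilde\delta(b)$ for all $b\in\mathcal{B}$, where $\delta_\partial$ is the unique derivation $\mathcal{B}\to B$ with $\delta_\partial(V)=0$, $\delta_\partial(M_f)=M_{\partial f}$ ($f\in\mathcal F$), and $\tilde\delta:\mathcal{B}\to B$ is approximately inner. Moreover $c_0$, $\partial$ and $\tilde\delta$ are uniquely determined by $\delta$.
   Context: Setup: $G$ is an infinite compact (Hausdorff) abelian group, written additively, and $x_1\in G$ generates a dense cyclic subgroup; $x_n=nx_1$, $\varphi(x)=x+x_1$. $\widehat G$ is the group of continuous characters and $\mathcal{F}$ is their linear span in $C(G)$. Let $H=\ell^2(\mathbb{Z})$ with canonical basis $\{E_l\}$; $VE_l=E_{l+1}$, $M_fE_l=f(x_l)E_l$, $\mathbb{L}E_l=lE_l$. $B=C^*(V,M_f:f\in C(G))$, $\mathcal{B}$ is the $*$-subalgebra generated by $V,V^{-1},M_\chi$ ($\chi\in\widehat G$). For $\theta\in\mathbb{R}$ let $\rho_\theta(b)=e^{i\theta\mathbb{L}}be^{-i\theta\mathbb{L}}$. A derivation $\delta:\mathcal{B}\to B$ (linear, Leibniz rule) is invariant if $\rho_\theta^{-1}(\delta(\rho_\theta(b)))=\delta(b)$ for all $\theta,b$; it is approximately inner if $\delta(b)=\lim_j[y_j,b]$ in norm for some $y_j\in B$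 and all $b\in\mathcal{B}$. A $\varphi$-invariant derivation $\partial:\mathcal F\to C(G)$ is a derivation with $(\partial f)\circ\varphi=\partial(f\circ\varphi)$ for $f\in\mathcal F$. *)

theory Defs
  imports "HOL-Analysis.Analysis"
begin

text \<open>Operators on H = l2(Z) are represented by their matrices with respect to the
canonical basis E_l: the entry a l k is the inner product of E_l with a E_k.\<close>

type_synonym mat = "int \<Rightarrow> int \<Rightarrow> complex"

definition mzero :: mat where "mzero = (\<lambda>l k. 0)"
definition madd :: "mat \<Rightarrow> mat \<Rightarrow> mat" where "madd a b = (\<lambda>l k. a l k + b l k)"
definition msub :: "mat \<Rightarrow> mat \<Rightarrow> mat" where "msub a b = (\<lambda>l k. a l k - b l k)"
definition msc :: "complex \<Rightarrow> mat \<Rightarrow> mat" where "msc c a = (\<lambda>l k. c * a l k)"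
definition mmul :: "mat \<Rightarrow> mat \<Rightarrow> mat" where
  "mmul a b = (\<lambda>l k. infsum (\<lambda>j. a l j * b j k) UNIV)"
definition madj :: "mat \<Rightarrow> mat" where "madj a = (\<lambda>l k. cnj (a k l))"
definition mcomm :: "mat \<Rightarrow> mat \<Rightarrow> mat" where "mcomm a b = msub (mmul a b) (mmul b a)"

text \<open>Values of the sesquilinear form on finitely supported vectors of norm at most 1;
the operator norm is their supremum, and the matrix is a bounded operator iff it is bounded.\<close>
definition form_vals :: "mat \<Rightarrow> real set" where
  "form_vals a = {cmod (\<Sum>l\<in>S. \<Sum>k\<in>S. cnj (y l) * a l k * x k) | S x y.
      finite S \<and> (\<Sum>k\<in>S. (cmod (x k))^2) \<le> 1 \<and> (\<Sum>l\<in>S. (cmod (y l))^2) \<le> 1}"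
definition bounded_mat :: "mat \<Rightarrow> bool" where "bounded_mat a = bdd_above (form_vals a)"
definition mnorm :: "mat \<Rightarrow> real" where "mnorm a = Sup (form_vals a)"

definition mtendsto :: "(nat \<Rightarrow> mat) \<Rightarrow> mat \<Rightarrow> bool" where
  "mtendsto y a \<longleftrightarrow> bounded_mat a \<and> (\<forall>n. bounded_mat (y n)) \<and>
      (\<lambda>n. mnorm (msub (y n) a)) \<longlonglongrightarrow> 0"

definition zmul :: "int \<Rightarrow> 'g::ab_group_add \<Rightarrow> 'g" where
  "zmul n x = (if 0 \<le> n then ((+) x ^^ nat n) 0 else - (((+) x ^^ nat (- n)) 0))"

definition Vop :: mat where "Vop = (\<lambda>l k. if l = k + 1 then 1 else 0)"
definition Vinv :: mat where "Vinv = (\<lambda>l k. if l + 1 = k then 1 else 0)"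
definition Mop :: "'g::ab_group_add \<Rightarrow> ('g \<Rightarrow> complex) \<Rightarrow> mat" where
  "Mop x1 f = (\<lambda>l k. if l = k then f (zmul l x1) else 0)"
text \<open>The commutator [L,b] with the (unbounded) number operator L E_l = l E_l.\<close>
definition Lcomm :: "mat \<Rightarrow> mat" where "Lcomm b = (\<lambda>l k. of_int (l - k) * b l k)"
text \<open>rho_theta(b) = exp(i theta L) b exp(-i theta L).\<close>
definition rho :: "real \<Rightarrow> mat \<Rightarrow> mat" where
  "rho \<theta> b = (\<lambda>l k. exp (\<i> * of_real \<theta> * of_int (l - k)) * b l k)"

definition character :: "('g::{ab_group_add,topological_space} \<Rightarrow> complex) \<Rightarrow> bool" where
  "character ch \<longleftrightarrow> continuous_on UNIV ch \<and> (\<forall>x y. ch (x + y) = ch x * ch y) \<and> (\<forall>x. cmod (ch x) = 1)"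
definition Fspan :: "('g::{ab_group_add,topological_space} \<Rightarrow> complex) set" where
  "Fspan = {f. \<exists>S c. finite S \<and> S \<subseteq> Collect character \<and> f = (\<lambda>x. \<Sum>ch\<in>S. c ch * ch x)}"

inductive_set Bpoly :: "'g::{ab_group_add,topological_space} \<Rightarrow> mat set" for x1 :: 'g where
  gen_V: "Vop \<in> Bpoly x1"
| gen_Vinv: "Vinv \<in> Bpoly x1"
| gen_M: "character ch \<Longrightarrow> Mop x1 ch \<in> Bpoly x1"
| add: "a \<in> Bpoly x1 \<Longrightarrow> b \<in> Bpoly x1 \<Longrightarrow> madd a b \<in> Bpoly x1"
| scal: "a \<in> Bpoly x1 \<Longrightarrow> msc c a \<in> Bpoly x1"
| mul: "a \<in> Bpoly x1 \<Longrightarrow> b \<in> Bpoly x1 \<Longrightarrow> mmul a b \<in> Bpoly x1"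
| adj: "a \<in> Bpoly x1 \<Longrightarrow> madj a \<in> Bpoly x1"

inductive_set Balg0 :: "'g::{ab_group_add,topological_space} \<Rightarrow> mat set" for x1 :: 'g where
  gen_V: "Vop \<in> Balg0 x1"
| gen_M: "continuous_on UNIV f \<Longrightarrow> Mop x1 f \<in> Balg0 x1"
| add: "a \<in> Balg0 x1 \<Longrightarrow> b \<in> Balg0 x1 \<Longrightarrow> madd a b \<in> Balg0 x1"
| scal: "a \<in> Balg0 x1 \<Longrightarrow> msc c a \<in> Balg0 x1"
| mul: "a \<in> Balg0 x1 \<Longrightarrow> b \<in> Balg0 x1 \<Longrightarrow> mmul a b \<in> Balg0 x1"
| adj: "a \<in> Balg0 x1 \<Longrightarrow> madj a \<in> Balg0 x1"

definition Bstar :: "'g::{ab_group_add,topological_space} \<Rightarrow> mat set" where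
  "Bstar x1 = {b. \<exists>y. (\<forall>n. y n \<in> Balg0 x1) \<and> mtendsto y b}"

definition derivation_on :: "mat set \<Rightarrow> (mat \<Rightarrow> mat) \<Rightarrow> bool" where
  "derivation_on A d \<longleftrightarrow>
     (\<forall>a\<in>A. \<forall>b\<in>A. d (madd a b) = madd (d a) (d b)) \<and>
     (\<forall>c. \<forall>a\<in>A. d (msc c a) = msc c (d a)) \<and>
     (\<forall>a\<in>A. \<forall>b\<in>A. d (mmul a b) = madd (mmul (d a) b) (mmul a (d b)))"

definition invariant_der :: "'g::{ab_group_add,topological_space} \<Rightarrow> (mat \<Rightarrow> mat) \<Rightarrow> bool" where
  "invariant_der x1 d \<longleftrightarrow> (\<forall>\<theta>. \<forall>b\<in>Bpoly x1. rho (- \<theta>) (d (rho \<theta> b)) = d b)"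

definition approx_inner :: "'g::{ab_group_add,topological_space} \<Rightarrow> (mat \<Rightarrow> mat) \<Rightarrow> bool" where
  "approx_inner x1 d \<longleftrightarrow> d ` Bpoly x1 \<subseteq> Bstar x1 \<and>
     (\<exists>y. (\<forall>j. y j \<in> Bstar x1) \<and> (\<forall>b\<in>Bpoly x1. mtendsto (\<lambda>j. mcomm (y j) b) (d b)))"

definition phi_inv_derivation :: "'g::{ab_group_add,topological_space} \<Rightarrow> (('g \<Rightarrow> complex) \<Rightarrow> ('g \<Rightarrow> complex)) \<Rightarrow> bool" where
  "phi_inv_derivation x1 D \<longleftrightarrow>
     (\<forall>f\<in>Fspan. continuous_on UNIV (D f)) \<and>
     (\<forall>f\<in>Fspan. \<forall>g\<in>Fspan. D (\<lambda>x. f x + g x) = (\<lambda>x. D f x + D g x)) \<and>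
     (\<forall>c. \<forall>f\<in>Fspan. D (\<lambda>x. c * f x) = (\<lambda>x. c * D f x)) \<and>
     (\<forall>f\<in>Fspan. \<forall>g\<in>Fspan. D (\<lambda>x. f x * g x) = (\<lambda>x. D f x * g x + f x * D g x)) \<and>
     (\<forall>f\<in>Fspan. (\<lambda>x. D f (x + x1)) = D (\<lambda>x. f (x + x1)))"

definition is_delta_partial :: "'g::{ab_group_add,topological_space} \<Rightarrow> (('g \<Rightarrow> complex) \<Rightarrow> ('g \<Rightarrow> complex)) \<Rightarrow> (mat \<Rightarrow> mat) \<Rightarrow> bool" where
  "is_delta_partial x1 D d \<longleftrightarrow> derivation_on (Bpoly x1) d \<and> d ` Bpoly x1 \<subseteq> Bstar x1 \<and>
     d Vop = mzero \<and> (\<forall>f\<in>Fspan. d (Mop x1 f) = Mop x1 (D f))"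

definition decomposition :: "'g::{ab_group_add,topological_space} \<Rightarrow> (mat \<Rightarrow> mat) \<Rightarrow> complex \<Rightarrow>
    (('g \<Rightarrow> complex) \<Rightarrow> ('g \<Rightarrow> complex)) \<Rightarrow> (mat \<Rightarrow> mat) \<Rightarrow> bool" where
  "decomposition x1 \<delta> c0 D dt \<longleftrightarrow>
     phi_inv_derivation x1 D \<and> approx_inner x1 dt \<and>
     (\<exists>d. is_delta_partial x1 D d \<and>
          (\<forall>d'. is_delta_partial x1 D d' \<longrightarrow> (\<forall>b\<in>Bpoly x1. d' b = d b)) \<and>
          (\<forall>b\<in>Bpoly x1. \<delta> b = madd (madd (msc c0 (Lcomm b)) (d b)) (dt b)))"

end

theory Submission
  imports Defs
begin


lemma zmul_0[simp]: "zmul 0 x = 0" by (simp add: zmul_def)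

lemma pw_Suc': "((+) x ^^ Suc k) (0::'g::ab_group_add) = ((+) x ^^ k) 0 + x"
  by (simp add: add.commute)

lemma zmul_succ: "zmul (n+1) x = zmul n x + (x::'g::ab_group_add)"
proof (cases "0 \<le> n")
  case True
  then have "nat (n+1) = Suc (nat n)" by simp
  then show ?thesis using True unfolding zmul_def using pw_Suc'[where x=x and k="nat n"] by simp
next
  case False
  define m where "m = nat (-n) - 1"
  have m: "n = - int (Suc m)" using False unfolding m_def by simp
  show ?thesis
  proof (cases m)
    case 0 then show ?thesis using m by (simp add: zmul_def)
  next
    case (Suc p)
    then have a: "n + 1 = - int (Suc p)" using m by simp
    have e1: "nat (-n) = Suc (Suc p)" using m Suc by simp
    have e2: "nat (-(n+1)) = Suc p" using a by simp
    have n1: "\<not> 0 \<le> n + 1" using a by simp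
    have "zmul n x = - (((+) x ^^ nat (-n)) 0)" using False unfolding zmul_def by simp
    then have "zmul n x = - (((+) x ^^ Suc (Suc p)) 0)" by (simp only: e1)
    moreover have "zmul (n+1) x = - (((+) x ^^ nat (-(n+1))) 0)" using n1 unfolding zmul_def by simp
    then have "zmul (n+1) x = - (((+) x ^^ Suc p) 0)" by (simp only: e2)
    ultimately show ?thesis using pw_Suc'[where x=x and k="Suc p"] by simp
  qed
qed

lemma zmul_add: "zmul (a+b) x = zmul a x + zmul b (x::'g::ab_group_add)"
proof (induction b rule: int_induct[where k=0])
  case base then show ?case by simp
next
  case (step1 i) then show ?case by (metis add.assoc zmul_succ)
next
  case (step2 i)
  have "zmul (a + i) x = zmul (a + (i - 1)) x + x" using zmul_succ[of "a + (i-1)" x] by simp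
  moreover have "zmul i x = zmul (i - 1) x + x" using zmul_succ[of "i-1" x] by simp
  ultimately show ?case using step2 by (simp add: algebra_simps)
qed

lemma zmul_1[simp]: "zmul 1 x = x" using zmul_succ[of 0 x] by simp

lemma infsum_fin_supp:
  fixes f :: "'a \<Rightarrow> 'b::{comm_monoid_add, t2_space}"
  assumes "finite F" "\<And>j. j \<notin> F \<Longrightarrow> f j = 0"
  shows "infsum f UNIV = sum f F"
proof -
  have "infsum f UNIV = infsum f F"
    by (rule infsum_cong_neutral) (use assms in auto)
  then show ?thesis using assms by simp
qed

lemma infsum_single:
  fixes f :: "'a \<Rightarrow> 'b::{comm_monoid_add, t2_space}"
  assumes "\<And>j. j \<noteq> a \<Longrightarrow> f j = 0"
  shows "infsum f UNIV = f a"
  using infsum_fin_supp[of "{a}" f] assms by auto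

definition banded :: "nat \<Rightarrow> mat \<Rightarrow> bool" where
  "banded N a \<longleftrightarrow> (\<forall>l k. int N < \<bar>l - k\<bar> \<longrightarrow> a l k = 0)"

lemma bandedD: "banded N a \<Longrightarrow> int N < \<bar>l - k\<bar> \<Longrightarrow> a l k = 0"
  unfolding banded_def by blast

lemma banded_mono: "banded N a \<Longrightarrow> N \<le> M \<Longrightarrow> banded M a"
  unfolding banded_def by force

lemma mmul_band_left:
  assumes "banded N a"
  shows "mmul a X l k = (\<Sum>j\<in>{l - int N..l + int N}. a l j * X j k)"
  unfolding mmul_def
  by (rule infsum_fin_supp) (use assms in \<open>auto simp: banded_def\<close>)

lemma mmul_band_right:
  assumes "banded N b"
  shows "mmul X b l k = (\<Sum>j\<in>{k - int N..k + int N}. X l j * b j k)"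
  unfolding mmul_def
  by (rule infsum_fin_supp) (use assms in \<open>auto simp: banded_def\<close>)

lemma mmul_Mop_left: "mmul (Mop x1 h) X l k = h (zmul l x1) * X l k"
  unfolding mmul_def by (subst infsum_single[where a=l]) (auto simp: Mop_def)

lemma mmul_Mop_right: "mmul X (Mop x1 h) l k = X l k * h (zmul k x1)"
  unfolding mmul_def by (subst infsum_single[where a=k]) (auto simp: Mop_def)

lemma mmul_V_left: "mmul Vop X l k = X (l - 1) k"
  unfolding mmul_def by (subst infsum_single[where a="l-1"]) (auto simp: Vop_def)

lemma mmul_V_right: "mmul X Vop l k = X l (k + 1)"
  unfolding mmul_def by (subst infsum_single[where a="k+1"]) (auto simp: Vop_def)

lemma mmul_Vinv_left: "mmul Vinv X l k = X (l + 1) k"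
  unfolding mmul_def by (subst infsum_single[where a="l+1"]) (auto simp: Vinv_def)

lemma mmul_Vinv_right: "mmul X Vinv l k = X l (k - 1)"
  unfolding mmul_def by (subst infsum_single[where a="k-1"]) (auto simp: Vinv_def)

lemma mmul_zero_left[simp]: "mmul mzero X = mzero"
  unfolding mmul_def mzero_def by simp

lemma banded_Vop: "banded 1 Vop" unfolding banded_def Vop_def by auto
lemma banded_Vinv: "banded 1 Vinv" unfolding banded_def Vinv_def by auto
lemma banded_Mop: "banded 0 (Mop x1 h)" unfolding banded_def Mop_def by auto
lemma banded_madd: "banded N a \<Longrightarrow> banded N b \<Longrightarrow> banded N (madd a b)"
  unfolding banded_def madd_def by auto
lemma banded_msc: "banded N a \<Longrightarrow> banded N (msc c a)"
  unfolding banded_def msc_def by auto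
lemma banded_madj: "banded N a \<Longrightarrow> banded N (madj a)"
  unfolding banded_def madj_def by (auto simp: abs_minus_commute)
lemma banded_mmul: 
  assumes "banded N a" "banded M b" shows "banded (N + M) (mmul a b)"
  unfolding banded_def
proof (intro allI impI)
  fix l k assume lk: "int (N + M) < \<bar>l - k\<bar>"
  have "\<And>j. a l j * b j k = 0"
  proof -
    fix j
    have "int N < \<bar>l - j\<bar> \<or> int M < \<bar>j - k\<bar>" using lk by linarith
    then show "a l j * b j k = 0" using assms by (auto simp: banded_def)
  qed
  then have "(\<lambda>j. a l j * b j k) = (\<lambda>_. 0)" by auto
  then show "mmul a b l k = 0" unfolding mmul_def by simp
qed

subsection \<open>Norm facts\<close>

lemma form_vals_0: "0 \<in> form_vals a"
  unfolding form_vals_def by (rule CollectI, rule exI[of _ "{}"]) auto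

lemma form_vals_ne: "form_vals a \<noteq> {}" using form_vals_0 by blast

lemma mnorm_upper: "bounded_mat a \<Longrightarrow> v \<in> form_vals a \<Longrightarrow> v \<le> mnorm a"
  unfolding bounded_mat_def mnorm_def by (rule cSup_upper)

lemma mnorm_nonneg: "bounded_mat a \<Longrightarrow> 0 \<le> mnorm a"
  using mnorm_upper form_vals_0 by blast

lemma mnorm_least:
  assumes "\<And>v. v \<in> form_vals a \<Longrightarrow> v \<le> C"
  shows "bounded_mat a" "mnorm a \<le> C"
  using assms form_vals_ne unfolding bounded_mat_def mnorm_def
  by (auto intro!: cSup_least simp: bdd_above_def)

lemma form_valsE:
  assumes "v \<in> form_vals a"
  obtains S x y where "finite S" "(\<Sum>k\<in>S. (cmod (x k))^2) \<le> 1" "(\<Sum>l\<in>S. (cmod (y l))^2) \<le> 1"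
    "v = cmod (\<Sum>l\<in>S. \<Sum>k\<in>S. cnj (y l) * a l k * x k)"
  using assms unfolding form_vals_def by blast

lemma form_valsI:
  assumes "finite S" "(\<Sum>k\<in>S. (cmod (x k))^2) \<le> 1" "(\<Sum>l\<in>S. (cmod (y l))^2) \<le> 1"
  shows "cmod (\<Sum>l\<in>S. \<Sum>k\<in>S. cnj (y l) * a l k * x k) \<in> form_vals a"
  using assms unfolding form_vals_def by blast

lemma entry_le_mnorm:
  assumes "bounded_mat a"
  shows "cmod (a l k) \<le> mnorm a"
proof -
  define x where "x = (\<lambda>i. if i = k then 1 else 0::complex)"
  define y where "y = (\<lambda>i. if i = l then 1 else 0::complex)"
  have sx: "(\<Sum>i\<in>{l,k}. (cmod (x i))^2) = 1"
    unfolding x_def by (cases "l = k") simp_all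
  have sy: "(\<Sum>i\<in>{l,k}. (cmod (y i))^2) = 1"
    unfolding y_def by (cases "l = k") simp_all
  have "(\<Sum>i\<in>{l,k}. \<Sum>j\<in>{l,k}. cnj (y i) * a i j * x j) = a l k"
    unfolding x_def y_def by (cases "l = k") simp_all
  then have "cmod (a l k) \<in> form_vals a"
    using form_valsI[of "{l,k}" x y a] sx sy by simp
  then show ?thesis using mnorm_upper assms by blast
qed


lemma form_madd_le:
  assumes "bounded_mat a" "bounded_mat b" "v \<in> form_vals (madd a b)"
  shows "v \<le> mnorm a + mnorm b"
proof -
  obtain S x y where S: "finite S" "(\<Sum>k\<in>S. (cmod (x k))^2) \<le> 1" "(\<Sum>l\<in>S. (cmod (y l))^2) \<le> 1"
    and v: "v = cmod (\<Sum>l\<in>S. \<Sum>k\<in>S. cnj (y l) * madd a b l k * x k)"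
    using assms(3) by (rule form_valsE)
  have "(\<Sum>l\<in>S. \<Sum>k\<in>S. cnj (y l) * madd a b l k * x k) =
      (\<Sum>l\<in>S. \<Sum>k\<in>S. cnj (y l) * a l k * x k) + (\<Sum>l\<in>S. \<Sum>k\<in>S. cnj (y l) * b l k * x k)"
    unfolding madd_def by (simp add: algebra_simps sum.distrib)
  then have "v = cmod ((\<Sum>l\<in>S. \<Sum>k\<in>S. cnj (y l) * a l k * x k) + (\<Sum>l\<in>S. \<Sum>k\<in>S. cnj (y l) * b l k * x k))"
    using v by simp
  also have "\<dots> \<le> cmod (\<Sum>l\<in>S. \<Sum>k\<in>S. cnj (y l) * a l k * x k) + cmod (\<Sum>l\<in>S. \<Sum>k\<in>S. cnj (y l) * b l k * x k)"
    by (rule norm_triangle_ineq)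
  also have "\<dots> \<le> mnorm a + mnorm b"
    using mnorm_upper[OF assms(1) form_valsI[OF S, of a]] mnorm_upper[OF assms(2) form_valsI[OF S, of b]]
    by linarith
  finally show ?thesis .
qed

lemma form_msc_le:
  assumes "bounded_mat a" "v \<in> form_vals (msc c a)"
  shows "v \<le> cmod c * mnorm a"
proof -
  obtain S x y where S: "finite S" "(\<Sum>k\<in>S. (cmod (x k))^2) \<le> 1" "(\<Sum>l\<in>S. (cmod (y l))^2) \<le> 1"
    and v: "v = cmod (\<Sum>l\<in>S. \<Sum>k\<in>S. cnj (y l) * msc c a l k * x k)"
    using assms(2) by (rule form_valsE)
  have "(\<Sum>l\<in>S. \<Sum>k\<in>S. cnj (y l) * msc c a l k * x k) = c * (\<Sum>l\<in>S. \<Sum>k\<in>S. cnj (y l) * a l k * x k)"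
    unfolding msc_def by (simp add: algebra_simps sum_distrib_left)
  then have "v = cmod c * cmod (\<Sum>l\<in>S. \<Sum>k\<in>S. cnj (y l) * a l k * x k)"
    using v by (simp add: norm_mult)
  also have "\<dots> \<le> cmod c * mnorm a"
    using mnorm_upper[OF assms(1) form_valsI[OF S, of a]] by (simp add: mult_left_mono)
  finally show ?thesis .
qed

lemma bounded_madd: "bounded_mat a \<Longrightarrow> bounded_mat b \<Longrightarrow> bounded_mat (madd a b)"
  using mnorm_least(1) form_madd_le by blast
lemma mnorm_madd: "bounded_mat a \<Longrightarrow> bounded_mat b \<Longrightarrow> mnorm (madd a b) \<le> mnorm a + mnorm b"
  using mnorm_least(2) form_madd_le by blast
lemma bounded_msc: "bounded_mat a \<Longrightarrow> bounded_mat (msc c a)"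
  using mnorm_least(1) form_msc_le by blast
lemma mnorm_msc: "bounded_mat a \<Longrightarrow> mnorm (msc c a) \<le> cmod c * mnorm a"
  using mnorm_least(2) form_msc_le by blast

lemma wsum_le:
  assumes "finite S"
  shows "(\<Sum>k\<in>S. (if \<bar>l - k\<bar> \<le> int N then 1 else 0::real)) \<le> 2 * real N + 1"
proof -
  define I where "I = {l - int N..l + int N}"
  have eq: "\<And>k. (\<bar>l - k\<bar> \<le> int N) = (k \<in> I)" unfolding I_def by auto
  have "(\<Sum>k\<in>S. (if \<bar>l - k\<bar> \<le> int N then 1 else 0::real)) = (\<Sum>k\<in>S. (if k \<in> I then 1 else 0::real))"
    using eq by simp
  also have "\<dots> = (\<Sum>k\<in>S \<inter> I. 1::real)" using sum.inter_restrict[OF assms, of "\<lambda>_. 1::real" I] by simp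
  also have "\<dots> = real (card (S \<inter> I))" by simp
  also have "\<dots> \<le> real (card I)" by (intro of_nat_mono card_mono) (auto simp: I_def)
  also have "card I = 2 * N + 1" unfolding I_def by simp
  finally show ?thesis by simp
qed

lemma wsum_le':
  assumes "finite S"
  shows "(\<Sum>l\<in>S. (if \<bar>l - k\<bar> \<le> int N then 1 else 0::real)) \<le> 2 * real N + 1"
  using wsum_le[OF assms, of k N] by (simp add: abs_minus_commute)

lemma banded_form_le:
  assumes bd: "banded N a" and C: "\<And>l k. cmod (a l k) \<le> C" and vv: "v \<in> form_vals a"
  shows "v \<le> (2 * real N + 1) * C"
proof -
  obtain S x y where S: "finite S" and sx: "(\<Sum>k\<in>S. (cmod (x k))^2) \<le> 1" and sy: "(\<Sum>l\<in>S. (cmod (y l))^2) \<le> 1"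
    and v: "v = cmod (\<Sum>l\<in>S. \<Sum>k\<in>S. cnj (y l) * a l k * x k)"
    using vv by (rule form_valsE)
  have C0: "0 \<le> C" using C[of 0 0] norm_ge_zero order_trans by blast
  define w where "w = (\<lambda>l k. if \<bar>l - k\<bar> \<le> int N then 1 else 0::real)"
  have t: "cmod (cnj (y l) * a l k * x k) \<le> C / 2 * (w l k * (cmod (y l))^2 + w l k * (cmod (x k))^2)" for l k
  proof (cases "\<bar>l - k\<bar> \<le> int N")
    case False
    then have "a l k = 0" using bd by (auto simp: banded_def)
    then show ?thesis using False by (simp add: w_def)
  next
    case True
    have sq: "2 * (cmod (y l) * cmod (x k)) \<le> (cmod (y l))^2 + (cmod (x k))^2"
      using sum_squares_bound[of "cmod (y l)" "cmod (x k)"] by (simp add: power2_eq_square)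
    have "cmod (cnj (y l) * a l k * x k) = cmod (y l) * cmod (a l k) * cmod (x k)"
      by (simp add: norm_mult)
    also have "\<dots> \<le> cmod (y l) * C * cmod (x k)"
      by (intro mult_right_mono mult_left_mono C) auto
    also have "\<dots> = C / 2 * (2 * (cmod (y l) * cmod (x k)))" by simp
    also have "\<dots> \<le> C / 2 * ((cmod (y l))^2 + (cmod (x k))^2)"
      using sq C0 by (intro mult_left_mono) auto
    finally show ?thesis using True by (simp add: w_def)
  qed
  have "v \<le> (\<Sum>l\<in>S. cmod (\<Sum>k\<in>S. cnj (y l) * a l k * x k))"
    unfolding v by (rule norm_sum)
  also have "\<dots> \<le> (\<Sum>l\<in>S. \<Sum>k\<in>S. cmod (cnj (y l) * a l k * x k))"
    by (intro sum_mono norm_sum)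
  also have "\<dots> \<le> (\<Sum>l\<in>S. \<Sum>k\<in>S. C / 2 * (w l k * (cmod (y l))^2 + w l k * (cmod (x k))^2))"
    by (intro sum_mono t)
  also have "\<dots> = C / 2 * ((\<Sum>l\<in>S. (cmod (y l))^2 * (\<Sum>k\<in>S. w l k)) + (\<Sum>l\<in>S. \<Sum>k\<in>S. w l k * (cmod (x k))^2))"
    by (simp add: sum_distrib_left sum_distrib_right sum.distrib algebra_simps)
  finally have v1: "v \<le> C / 2 * ((\<Sum>l\<in>S. (cmod (y l))^2 * (\<Sum>k\<in>S. w l k)) + (\<Sum>l\<in>S. \<Sum>k\<in>S. w l k * (cmod (x k))^2))" .
  have "(\<Sum>l\<in>S. \<Sum>k\<in>S. w l k * (cmod (x k))^2) = (\<Sum>k\<in>S. (cmod (x k))^2 * (\<Sum>l\<in>S. w l k))"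
    by (subst sum.swap) (simp add: sum_distrib_right algebra_simps)
  also have "\<dots> \<le> (\<Sum>k\<in>S. (cmod (x k))^2 * (2 * real N + 1))"
    by (intro sum_mono mult_left_mono) (use wsum_le'[OF S] in \<open>auto simp: w_def\<close>)
  also have "\<dots> \<le> 2 * real N + 1"
    using sx by (simp add: sum_distrib_right[symmetric])
  finally have B: "(\<Sum>l\<in>S. \<Sum>k\<in>S. w l k * (cmod (x k))^2) \<le> 2 * real N + 1" .
  have "(\<Sum>l\<in>S. (cmod (y l))^2 * (\<Sum>k\<in>S. w l k)) \<le> (\<Sum>l\<in>S. (cmod (y l))^2 * (2 * real N + 1))"
    by (intro sum_mono mult_left_mono) (use wsum_le[OF S] in \<open>auto simp: w_def\<close>)
  also have "\<dots> \<le> 2 * real N + 1"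
    using sy by (simp add: sum_distrib_right[symmetric])
  finally have A: "(\<Sum>l\<in>S. (cmod (y l))^2 * (\<Sum>k\<in>S. w l k)) \<le> 2 * real N + 1" .
  have "C / 2 * ((\<Sum>l\<in>S. (cmod (y l))^2 * (\<Sum>k\<in>S. w l k)) + (\<Sum>l\<in>S. \<Sum>k\<in>S. w l k * (cmod (x k))^2))
     \<le> C / 2 * ((2 * real N + 1) + (2 * real N + 1))"
    using A B C0 by (intro mult_left_mono) auto
  with v1 show ?thesis by (simp add: algebra_simps)
qed

lemma banded_bounded:
  assumes "banded N a" "\<And>l k. cmod (a l k) \<le> C"
  shows "bounded_mat a" "mnorm a \<le> (2 * real N + 1) * C"
  using mnorm_least[of a "(2 * real N + 1) * C"] banded_form_le[OF assms] by auto

locale setting =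
  fixes x1 :: "'g::{ab_group_add,t2_space}"
  assumes cpt: "compact (UNIV::'g set)"
  and addc: "continuous_on UNIV (\<lambda>p::'g\<times>'g. fst p + snd p)"
  and negc: "continuous_on UNIV (\<lambda>x::'g. - x)"
  and dense: "closure (range (\<lambda>n::int. zmul n x1)) = UNIV"
begin

abbreviation xs :: "int \<Rightarrow> 'g" where "xs n \<equiv> zmul n x1"

lemma transl_cont: "continuous_on UNIV (\<lambda>x::'g. x + a)"
proof -
  have "continuous_on UNIV (\<lambda>x::'g. (x, a))" by (intro continuous_intros)
  from continuous_on_compose2[OF addc this] show ?thesis by simp
qed

lemma cont_transl: "continuous_on UNIV (h::'g \<Rightarrow> 'b::topological_space) \<Longrightarrow> continuous_on UNIV (\<lambda>x. h (x + a))"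
  using continuous_on_compose2[OF _ transl_cont, of UNIV h a] by simp

lemma cont_bounded:
  fixes h :: "'g \<Rightarrow> 'b::real_normed_vector"
  assumes "continuous_on UNIV h"
  shows "\<exists>B. \<forall>x. norm (h x) \<le> B"
proof -
  have "compact (h ` UNIV)" by (rule compact_continuous_image[OF assms cpt])
  then have "bounded (h ` UNIV)" by (rule compact_imp_bounded)
  then show ?thesis unfolding bounded_iff by auto
qed

lemma dense_closed:
  assumes "closed C" "\<And>l. xs l \<in> C"
  shows "x \<in> C"
proof -
  have "range xs \<subseteq> C" using assms by auto
  then have "closure (range xs) \<subseteq> C" using closure_minimal assms(1) by blast
  then show ?thesis using dense by auto
qed

lemma dense_eq:
  fixes h1 h2 :: "'g \<Rightarrow> 'b::t2_space"
  assumes "continuous_on UNIV h1" "continuous_on UNIV h2" "\<And>l. h1 (xs l) = h2 (xs l)"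
  shows "h1 = h2"
proof
  fix x show "h1 x = h2 x"
    using dense_closed[OF closed_Collect_eq[OF assms(1,2)], of x] assms(3) by auto
qed

lemma dense_le:
  fixes h :: "'g \<Rightarrow> 'b::real_normed_vector"
  assumes "continuous_on UNIV h" "\<And>l. norm (h (xs l)) \<le> B"
  shows "norm (h x) \<le> B"
proof -
  have c: "continuous_on UNIV (\<lambda>x. norm (h x))" by (intro continuous_intros assms)
  have "closed {x. norm (h x) \<le> B}" by (rule closed_Collect_le[OF c continuous_on_const])
  then show ?thesis using dense_closed[of "{x. norm (h x) \<le> B}" x] assms(2) by auto
qed

lemma xs_add: "xs (a + b) = xs a + xs b" by (rule zmul_add)

end



context setting begin

definition cdiag :: "mat \<Rightarrow> bool" where
  "cdiag a \<longleftrightarrow> (\<forall>m. \<exists>h. continuous_on UNIV h \<and> (\<forall>l. a (l+m) l = h (xs l)))"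

definition repr :: "mat \<Rightarrow> bool" where
  "repr a \<longleftrightarrow> (\<exists>N. banded N a) \<and> cdiag a"

lemma cdiagE:
  assumes "cdiag a"
  obtains H where "\<And>m. continuous_on UNIV (H m)" "\<And>m l. a (l+m) l = H m (xs l)"
proof -
  from assms have "\<forall>m. \<exists>h. continuous_on UNIV h \<and> (\<forall>l. a (l+m) l = h (xs l))" unfolding cdiag_def .
  then obtain H where "\<forall>m. continuous_on UNIV (H m) \<and> (\<forall>l. a (l+m) l = H m (xs l))"
    by (rule choice[THEN exE]) blast
  then show ?thesis using that by blast
qed

lemma repr_Vop: "repr Vop"
  unfolding repr_def cdiag_def
proof (intro conjI allI)
  show "\<exists>N. banded N Vop" using banded_Vop by blast
  fix m
  show "\<exists>h. continuous_on UNIV h \<and> (\<forall>l. Vop (l + m) l = h (xs l))"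
    by (rule exI[of _ "\<lambda>_. if m = 1 then 1 else 0"]) (auto simp: Vop_def)
qed

lemma repr_Mop: assumes "continuous_on UNIV f" shows "repr (Mop x1 f)"
  unfolding repr_def cdiag_def
proof (intro conjI allI)
  show "\<exists>N. banded N (Mop x1 f)" using banded_Mop by blast
  fix m
  show "\<exists>h. continuous_on UNIV h \<and> (\<forall>l. Mop x1 f (l + m) l = h (xs l))"
  proof (cases "m = 0")
    case True then show ?thesis using assms by (intro exI[of _ f]) (auto simp: Mop_def)
  next
    case False then show ?thesis by (intro exI[of _ "\<lambda>_. 0"]) (auto simp: Mop_def)
  qed
qed

lemma repr_madd: assumes "repr a" "repr b" shows "repr (madd a b)"
proof -
  obtain N M where "banded N a" "banded M b" using assms unfolding repr_def by blast
  then have "banded (max N M) (madd a b)"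
    using banded_mono[of N a "max N M"] banded_mono[of M b "max N M"] banded_madd by simp
  moreover have "cdiag a" using assms unfolding repr_def by blast
  then obtain Ha where Ha: "\<And>m. continuous_on UNIV (Ha m)" "\<And>m l. a (l+m) l = Ha m (xs l)"
    by (rule cdiagE) blast
  moreover have "cdiag b" using assms unfolding repr_def by blast
  then obtain Hb where Hb: "\<And>m. continuous_on UNIV (Hb m)" "\<And>m l. b (l+m) l = Hb m (xs l)"
    by (rule cdiagE) blast
  moreover have "\<exists>h. continuous_on UNIV h \<and> (\<forall>l. madd a b (l + m) l = h (xs l))" for m
    by (rule exI[of _ "\<lambda>x. Ha m x + Hb m x"]) (auto intro!: continuous_intros Ha Hb simp: madd_def Ha(2) Hb(2))
  ultimately show ?thesis unfolding repr_def cdiag_def by blast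
qed

lemma repr_msc: assumes "repr a" shows "repr (msc c a)"
proof -
  obtain N where "banded N a" using assms unfolding repr_def by blast
  then have "banded N (msc c a)" by (rule banded_msc)
  moreover have "cdiag a" using assms unfolding repr_def by blast
  then obtain Ha where Ha: "\<And>m. continuous_on UNIV (Ha m)" "\<And>m l. a (l+m) l = Ha m (xs l)"
    by (rule cdiagE) blast
  moreover have "\<exists>h. continuous_on UNIV h \<and> (\<forall>l. msc c a (l + m) l = h (xs l))" for m
    by (rule exI[of _ "\<lambda>x. c * Ha m x"]) (auto intro!: continuous_intros Ha simp: msc_def Ha(2))
  ultimately show ?thesis unfolding repr_def cdiag_def by blast
qed

lemma repr_madj: assumes "repr a" shows "repr (madj a)"
proof -
  obtain N where "banded N a" using assms unfolding repr_def by blast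
  then have "banded N (madj a)" by (rule banded_madj)
  moreover have "cdiag a" using assms unfolding repr_def by blast
  then obtain Ha where Ha: "\<And>m. continuous_on UNIV (Ha m)" "\<And>m l. a (l+m) l = Ha m (xs l)"
    by (rule cdiagE) blast
  moreover have "\<exists>h. continuous_on UNIV h \<and> (\<forall>l. madj a (l + m) l = h (xs l))" for m
  proof (rule exI[of _ "\<lambda>x. cnj (Ha (-m) (x + xs m))"], intro conjI allI)
    show "continuous_on UNIV (\<lambda>x. cnj (Ha (- m) (x + xs m)))"
      by (intro continuous_intros cont_transl Ha)
    fix l
    have "madj a (l + m) l = cnj (a ((l + m) + (-m)) (l + m))" by (simp add: madj_def)
    also have "\<dots> = cnj (Ha (-m) (xs (l+m)))" by (simp only: Ha)
    finally show "madj a (l + m) l = cnj (Ha (- m) (xs l + xs m))" by (simp add: xs_add)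
  qed
  ultimately show ?thesis unfolding repr_def cdiag_def by blast
qed

lemma repr_mmul: assumes "repr a" "repr b" shows "repr (mmul a b)"
proof -
  obtain N M where bN: "banded N a" and bM: "banded M b" using assms unfolding repr_def by blast
  then have "banded (N+M) (mmul a b)" by (rule banded_mmul)
  moreover have "cdiag a" using assms unfolding repr_def by blast
  then obtain Ha where Ha: "\<And>m. continuous_on UNIV (Ha m)" "\<And>m l. a (l+m) l = Ha m (xs l)"
    by (rule cdiagE) blast
  moreover have "cdiag b" using assms unfolding repr_def by blast
  then obtain Hb where Hb: "\<And>m. continuous_on UNIV (Hb m)" "\<And>m l. b (l+m) l = Hb m (xs l)"
    by (rule cdiagE) blast
  moreover have "\<exists>h. continuous_on UNIV h \<and> (\<forall>l. mmul a b (l + m) l = h (xs l))" for m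
  proof (rule exI[of _ "\<lambda>x. \<Sum>i\<in>{m - int N..m + int N}. Ha (m - i) (x + xs i) * Hb i x"], intro conjI allI)
    show "continuous_on UNIV (\<lambda>x. \<Sum>i\<in>{m - int N..m + int N}. Ha (m - i) (x + xs i) * Hb i x)"
      by (intro continuous_intros cont_transl Ha Hb)
    fix l
    have "mmul a b (l + m) l = (\<Sum>j\<in>{l + m - int N..l + m + int N}. a (l + m) j * b j l)"
      by (rule mmul_band_left[OF bN])
    also have "\<dots> = (\<Sum>i\<in>{m - int N..m + int N}. a (l + m) (l + i) * b (l + i) l)"
      by (rule sum.reindex_bij_witness[of _ "\<lambda>i. l + i" "\<lambda>j. j - l"]) auto
    also have "\<dots> = (\<Sum>i\<in>{m - int N..m + int N}. Ha (m - i) (xs l + xs i) * Hb i (xs l))"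
    proof (rule sum.cong[OF refl])
      fix i
      have "a (l + m) (l + i) = a ((l + i) + (m - i)) (l + i)" by simp
      also have "\<dots> = Ha (m - i) (xs (l + i))" by (rule Ha)
      finally have 1: "a (l + m) (l + i) = Ha (m - i) (xs l + xs i)" by (simp add: xs_add)
      have 2: "b (l + i) l = Hb i (xs l)" using Hb(2)[of l i] by simp
      show "a (l + m) (l + i) * b (l + i) l = Ha (m - i) (xs l + xs i) * Hb i (xs l)" using 1 2 by simp
    qed
    finally show "mmul a b (l + m) l = (\<Sum>i\<in>{m - int N..m + int N}. Ha (m - i) (xs l + xs i) * Hb i (xs l))" .
  qed
  ultimately show ?thesis unfolding repr_def cdiag_def by blast
qed

lemma Balg0_repr: "a \<in> Balg0 x1 \<Longrightarrow> repr a"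
  by (induction rule: Balg0.induct)
     (auto intro: repr_Vop repr_Mop repr_madd repr_msc repr_mmul repr_madj)

lemma Vinv_madj: "Vinv = madj Vop"
  by (auto simp: Vinv_def Vop_def madj_def fun_eq_iff)

lemma character_cont: "character ch \<Longrightarrow> continuous_on UNIV ch"
  unfolding character_def by blast

lemma Bpoly_Balg0: "a \<in> Bpoly x1 \<Longrightarrow> a \<in> Balg0 x1"
proof (induction rule: Bpoly.induct)
  case gen_Vinv show ?case unfolding Vinv_madj by (intro Balg0.adj Balg0.gen_V)
qed (auto intro: Balg0.intros character_cont)

lemma repr_entries_bounded:
  assumes "repr a" shows "\<exists>C. \<forall>l k. cmod (a l k) \<le> C"
proof -
  obtain N where bN: "banded N a" using assms unfolding repr_def by blast
  have "cdiag a" using assms unfolding repr_def by blast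
  then obtain H where H: "\<And>m. continuous_on UNIV (H m)" "\<And>m l. a (l+m) l = H m (xs l)"
    by (rule cdiagE) blast
  have "\<forall>m. \<exists>B. \<forall>x. norm (H m x) \<le> B" using cont_bounded[OF H(1)] by blast
  then obtain B where "\<forall>m. \<forall>x. norm (H m x) \<le> B m" by (rule choice[THEN exE]) blast
  then have B: "\<And>m x. norm (H m x) \<le> B m" by blast
  define C where "C = (\<Sum>m\<in>{- int N..int N}. \<bar>B m\<bar>)"
  have "cmod (a l k) \<le> C" for l k
  proof (cases "\<bar>l - k\<bar> \<le> int N")
    case True
    have "cmod (a l k) = cmod (a (k + (l - k)) k)" by simp
    also have "\<dots> = cmod (H (l - k) (xs k))" using H(2)[of k "l-k"] by simp
    also have "\<dots> \<le> B (l - k)" by (rule B)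
    also have "\<dots> \<le> \<bar>B (l - k)\<bar>" by simp
    also have "\<dots> \<le> C" unfolding C_def
      by (rule member_le_sum) (use True in auto)
    finally show ?thesis .
  next
    case False
    then have "a l k = 0" using bN by (auto simp: banded_def)
    moreover have "0 \<le> C" unfolding C_def by (auto intro: sum_nonneg)
    ultimately show ?thesis by simp
  qed
  then show ?thesis by blast
qed

lemma repr_bounded: "repr a \<Longrightarrow> bounded_mat a"
  using repr_entries_bounded banded_bounded(1) unfolding repr_def by blast

lemma msub_eq: "msub a b = madd a (msc (-1) b)"
  by (simp add: msub_def madd_def msc_def fun_eq_iff)

lemma bounded_msub: "bounded_mat a \<Longrightarrow> bounded_mat b \<Longrightarrow> bounded_mat (msub a b)"
  unfolding msub_eq by (intro bounded_madd bounded_msc)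

lemma mzero_vals: "v \<in> form_vals mzero \<Longrightarrow> v \<le> 0"
  by (auto elim!: form_valsE simp: mzero_def)

lemma mnorm_mzero: "bounded_mat mzero" "mnorm mzero = 0"
  using mnorm_least[of mzero 0] mzero_vals mnorm_nonneg[of mzero] by auto

lemma msub_self: "msub a a = mzero" by (simp add: msub_def mzero_def fun_eq_iff)

lemma Balg0_bounded: "a \<in> Balg0 x1 \<Longrightarrow> bounded_mat a"
  using Balg0_repr repr_bounded by blast

lemma Balg0_Bstar: "a \<in> Balg0 x1 \<Longrightarrow> a \<in> Bstar x1"
  unfolding Bstar_def mtendsto_def
  by (rule CollectI, rule exI[of _ "\<lambda>_. a"]) (simp add: Balg0_bounded msub_self mnorm_mzero)

lemma Bpoly_Bstar: "a \<in> Bpoly x1 \<Longrightarrow> a \<in> Bstar x1"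
  using Bpoly_Balg0 Balg0_Bstar by blast

lemma Bstar_bounded: "a \<in> Bstar x1 \<Longrightarrow> bounded_mat a"
  unfolding Bstar_def mtendsto_def by blast

lemma mtendsto_entries:
  assumes "mtendsto y a" "0 < e"
  shows "\<exists>J. \<forall>j\<ge>J. \<forall>l k. cmod (y j l k - a l k) \<le> e"
proof -
  have b: "bounded_mat a" "\<And>n. bounded_mat (y n)" and t: "(\<lambda>n. mnorm (msub (y n) a)) \<longlonglongrightarrow> 0"
    using assms(1) unfolding mtendsto_def by auto
  obtain J where J: "\<forall>n\<ge>J. norm (mnorm (msub (y n) a) - 0) < e" using LIMSEQ_D[OF t assms(2)] by blast
  have "cmod (y j l k - a l k) \<le> e" if "j \<ge> J" for j l k
  proof -
    have "cmod (y j l k - a l k) = cmod (msub (y j) a l k)" by (simp add: msub_def)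
    also have "\<dots> \<le> mnorm (msub (y j) a)" by (rule entry_le_mnorm[OF bounded_msub[OF b(2) b(1)]])
    also have "\<dots> \<le> e" using J that by auto
    finally show ?thesis .
  qed
  then show ?thesis by blast
qed

lemma mtendsto_madd:
  assumes "mtendsto y a" "mtendsto z b"
  shows "mtendsto (\<lambda>n. madd (y n) (z n)) (madd a b)"
proof -
  have ya: "bounded_mat a" "\<And>n. bounded_mat (y n)" and t1: "(\<lambda>n. mnorm (msub (y n) a)) \<longlonglongrightarrow> 0"
    using assms(1) unfolding mtendsto_def by auto
  have zb: "bounded_mat b" "\<And>n. bounded_mat (z n)" and t2: "(\<lambda>n. mnorm (msub (z n) b)) \<longlonglongrightarrow> 0"
    using assms(2) unfolding mtendsto_def by auto
  have eq: "msub (madd (y n) (z n)) (madd a b) = madd (msub (y n) a) (msub (z n) b)" for n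
    by (simp add: msub_def madd_def fun_eq_iff)
  have le: "norm (mnorm (msub (madd (y n) (z n)) (madd a b))) \<le> mnorm (msub (y n) a) + mnorm (msub (z n) b)" for n
  proof -
    have bb: "bounded_mat (msub (y n) a)" "bounded_mat (msub (z n) b)"
      using bounded_msub ya zb by auto
    have "0 \<le> mnorm (msub (madd (y n) (z n)) (madd a b))"
      unfolding eq by (intro mnorm_nonneg bounded_madd bb)
    then show ?thesis unfolding eq using mnorm_madd[OF bb] by simp
  qed
  have lim: "(\<lambda>n. mnorm (msub (y n) a) + mnorm (msub (z n) b)) \<longlonglongrightarrow> 0"
    using tendsto_add[OF t1 t2] by simp
  have "(\<lambda>n. mnorm (msub (madd (y n) (z n)) (madd a b))) \<longlonglongrightarrow> 0"
    by (rule Lim_null_comparison[OF _ lim]) (intro always_eventually allI le)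
  then show ?thesis unfolding mtendsto_def using ya zb bounded_madd by auto
qed

lemma mtendsto_msc:
  assumes "mtendsto y a"
  shows "mtendsto (\<lambda>n. msc c (y n)) (msc c a)"
proof -
  have ya: "bounded_mat a" "\<And>n. bounded_mat (y n)" and t1: "(\<lambda>n. mnorm (msub (y n) a)) \<longlonglongrightarrow> 0"
    using assms(1) unfolding mtendsto_def by auto
  have eq: "msub (msc c (y n)) (msc c a) = msc c (msub (y n) a)" for n
    by (simp add: msub_def msc_def fun_eq_iff algebra_simps)
  have le: "norm (mnorm (msub (msc c (y n)) (msc c a))) \<le> cmod c * mnorm (msub (y n) a)" for n
  proof -
    have bb: "bounded_mat (msub (y n) a)" using bounded_msub ya by auto
    have "0 \<le> mnorm (msub (msc c (y n)) (msc c a))"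
      unfolding eq by (intro mnorm_nonneg bounded_msc bb)
    then show ?thesis unfolding eq using mnorm_msc[OF bb] by simp
  qed
  have lim: "(\<lambda>n. cmod c * mnorm (msub (y n) a)) \<longlonglongrightarrow> 0"
    using tendsto_mult_left[OF t1, of "cmod c"] by simp
  have "(\<lambda>n. mnorm (msub (msc c (y n)) (msc c a))) \<longlonglongrightarrow> 0"
    by (rule Lim_null_comparison[OF _ lim]) (intro always_eventually allI le)
  then show ?thesis unfolding mtendsto_def using ya bounded_msc by auto
qed

lemma Bstar_madd: "a \<in> Bstar x1 \<Longrightarrow> b \<in> Bstar x1 \<Longrightarrow> madd a b \<in> Bstar x1"
proof -
  assume "a \<in> Bstar x1" "b \<in> Bstar x1"
  then obtain y z where "\<forall>n. y n \<in> Balg0 x1" "mtendsto y a" "\<forall>n. z n \<in> Balg0 x1" "mtendsto z b"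
    unfolding Bstar_def by blast
  then show ?thesis unfolding Bstar_def
    by (intro CollectI exI[of _ "\<lambda>n. madd (y n) (z n)"]) (auto intro: Balg0.add mtendsto_madd)
qed

lemma Bstar_msc: "a \<in> Bstar x1 \<Longrightarrow> msc c a \<in> Bstar x1"
proof -
  assume "a \<in> Bstar x1"
  then obtain y where "\<forall>n. y n \<in> Balg0 x1" "mtendsto y a"
    unfolding Bstar_def by blast
  then show ?thesis unfolding Bstar_def
    by (intro CollectI exI[of _ "\<lambda>n. msc c (y n)"]) (auto intro: Balg0.scal mtendsto_msc)
qed

lemma Bstar_cdiag:
  assumes "a \<in> Bstar x1" shows "cdiag a"
  unfolding cdiag_def
proof
  fix m
  obtain y where y: "\<And>n. y n \<in> Balg0 x1" "mtendsto y a"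
    using assms unfolding Bstar_def by blast
  have "\<forall>n. \<exists>h. continuous_on UNIV h \<and> (\<forall>l. y n (l+m) l = h (xs l))"
  proof
    fix n
    have "cdiag (y n)" using Balg0_repr[OF y(1)] repr_def by blast
    then obtain H where "\<And>m. continuous_on UNIV (H m)" "\<And>m l. y n (l+m) l = H m (xs l)"
      by (rule cdiagE) blast
    then show "\<exists>h. continuous_on UNIV h \<and> (\<forall>l. y n (l+m) l = h (xs l))" by blast
  qed
  then obtain H where "\<forall>n. continuous_on UNIV (H n) \<and> (\<forall>l. y n (l+m) l = H n (xs l))"
    by (rule choice[THEN exE]) blast
  then have Hc: "\<And>n. continuous_on UNIV (H n)" and Hy: "\<And>n l. y n (l+m) l = H n (xs l)" by auto
  have uc: "uniformly_Cauchy_on UNIV H"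
  proof (rule uniformly_Cauchy_onI)
    fix e :: real assume e: "0 < e"
    obtain J where J: "\<forall>j\<ge>J. \<forall>l k. cmod (y j l k - a l k) \<le> e / 3"
      using mtendsto_entries[OF y(2), of "e/3"] e by auto
    have "dist (H p x) (H q x) < e" if "p \<ge> J" "q \<ge> J" for p q x
    proof -
      have "norm (H p (xs l) - H q (xs l)) \<le> 2 * e / 3" for l
      proof -
        have "H p (xs l) - H q (xs l) = (y p (l+m) l - a (l+m) l) - (y q (l+m) l - a (l+m) l)"
          by (simp add: Hy)
        also have "norm \<dots> \<le> cmod (y p (l+m) l - a (l+m) l) + cmod (y q (l+m) l - a (l+m) l)"
          by (rule norm_triangle_ineq4)
        also have "\<dots> \<le> e / 3 + e / 3" using J that by (intro add_mono) auto
        finally show ?thesis by simp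
      qed
      then have "norm (H p x - H q x) \<le> 2 * e / 3"
        using dense_le[where h="\<lambda>x. H p x - H q x" and B="2 * e / 3" and x=x] by (auto intro!: continuous_intros Hc)
      then show ?thesis using e by (simp add: dist_norm)
    qed
    then show "\<exists>M. \<forall>x\<in>UNIV. \<forall>p\<ge>M. \<forall>q\<ge>M. dist (H p x) (H q x) < e" by blast
  qed
  then obtain h where ul: "uniform_limit UNIV H h sequentially"
    using Cauchy_uniformly_convergent[OF uc] unfolding uniformly_convergent_on_def by blast
  have hc: "continuous_on UNIV h"
    by (rule uniform_limit_theorem[OF _ ul]) (auto simp: Hc)
  have "h (xs l) = a (l+m) l" for l
  proof -
    have t1: "(\<lambda>n. H n (xs l)) \<longlonglongrightarrow> h (xs l)" by (rule tendsto_uniform_limitI[OF ul]) simp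
    have t2: "(\<lambda>n. H n (xs l)) \<longlonglongrightarrow> a (l+m) l"
    proof (rule LIMSEQ_I)
      fix r :: real assume r: "0 < r"
      obtain J where J: "\<forall>j\<ge>J. \<forall>l k. cmod (y j l k - a l k) \<le> r / 2"
        using mtendsto_entries[OF y(2), of "r/2"] r by auto
      have "norm (H n (xs l) - a (l+m) l) < r" if "n \<ge> J" for n
      proof -
        have "norm (H n (xs l) - a (l+m) l) = cmod (y n (l+m) l - a (l+m) l)" by (simp add: Hy)
        also have "\<dots> \<le> r / 2" using J that by blast
        finally show ?thesis using r by simp
      qed
      then show "\<exists>no. \<forall>n\<ge>no. norm (H n (xs l) - a (l+m) l) < r" by blast
    qed
    show ?thesis using LIMSEQ_unique[OF t1 t2] .
  qed
  then show "\<exists>h. continuous_on UNIV h \<and> (\<forall>l. a (l + m) l = h (xs l))" using hc by auto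
qed

end



context setting begin

lemma neg_transl_cont: "continuous_on UNIV (\<lambda>z::'g. y - z)"
proof -
  have "continuous_on UNIV (\<lambda>z::'g. (- z) + y)"
    using continuous_on_compose2[OF transl_cont negc, of y] by simp
  then show ?thesis by (simp add: algebra_simps)
qed

lemma unif_cont:
  fixes g :: "'g \<Rightarrow> complex"
  assumes gc: "continuous_on UNIV g" and e: "0 < e"
  shows "\<exists>U. open U \<and> 0 \<in> U \<and> (\<forall>y. \<forall>u\<in>U. cmod (g (y + u) - g y) < e)"
proof -
  define F where "F = (\<lambda>p::'g\<times>'g. g (fst p + snd p) - g (fst p))"
  have Fc: "continuous_on UNIV F" unfolding F_def
    by (intro continuous_intros continuous_on_compose2[OF gc addc]) (auto intro: continuous_on_compose2[OF gc continuous_on_fst])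
  have cl: "closed {p. e \<le> cmod (F p)}"
    by (rule closed_Collect_le[OF continuous_on_const]) (intro continuous_intros Fc)
  have "compact (UNIV :: ('g\<times>'g) set)" using compact_Times[OF cpt cpt] by simp
  then have "compact {p. e \<le> cmod (F p)}" using compact_Int_closed[OF _ cl] by fastforce
  then have "compact (snd ` {p. e \<le> cmod (F p)})"
    by (rule compact_continuous_image[rotated]) (intro continuous_intros)
  then have clK: "closed (snd ` {p. e \<le> cmod (F p)})" by (rule compact_imp_closed)
  define U where "U = - (snd ` {p. e \<le> cmod (F p)})"
  have "open U" unfolding U_def using clK by (simp add: open_Compl)
  moreover have "0 \<in> U" unfolding U_def using e by (auto simp: F_def)
  moreover have "\<forall>y. \<forall>u\<in>U. cmod (g (y + u) - g y) < e"
  proof (intro allI ballI)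
    fix y u assume "u \<in> U"
    then have "(y, u) \<notin> {p. e \<le> cmod (F p)}" unfolding U_def by (metis ComplD image_eqI snd_conv)
    then show "cmod (g (y + u) - g y) < e" by (simp add: F_def)
  qed
  ultimately show ?thesis by blast
qed

lemma orbit_cover:
  assumes U: "open U" "0 \<in> U"
  shows "\<exists>M::nat. \<forall>y. \<exists>m. \<bar>m\<bar> \<le> int M \<and> y - xs m \<in> U"
proof -
  define Ob where "Ob = (\<lambda>m. (\<lambda>y. y + (- xs m)) -` U)"
  have opn: "open (Ob m)" for m unfolding Ob_def by (rule open_vimage[OF U(1) transl_cont])
  have cov: "UNIV \<subseteq> (\<Union>m\<in>UNIV. Ob m)"
  proof
    fix y :: 'g
    define W where "W = (\<lambda>z. y - z) -` U"
    have "open W" unfolding W_def by (rule open_vimage[OF U(1) neg_transl_cont])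
    moreover have "y \<in> W" using U(2) by (simp add: W_def)
    ultimately have "W \<inter> closure (range xs) \<noteq> {}" using dense by auto
    then have "W \<inter> range xs \<noteq> {}" using open_Int_closure_eq_empty[OF \<open>open W\<close>] by blast
    then obtain m where "y - xs m \<in> U" unfolding W_def by auto
    then show "y \<in> (\<Union>m\<in>UNIV. Ob m)" unfolding Ob_def by (auto simp: algebra_simps)
  qed
  obtain C where C: "C \<subseteq> UNIV" "finite C" "UNIV \<subseteq> (\<Union>m\<in>C. Ob m)"
    by (rule compactE_image[OF cpt opn cov]) blast
  define M where "M = nat (Max (insert 0 (abs ` C)))"
  have "\<bar>m\<bar> \<le> int M" if "m \<in> C" for m
  proof -
    have "\<bar>m\<bar> \<le> Max (insert 0 (abs ` C))" using C(2) that by (intro Max_ge) auto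
    moreover have "0 \<le> Max (insert 0 (abs ` C))" using C(2) by (intro Max_ge) auto
    ultimately show ?thesis unfolding M_def by simp
  qed
  moreover have "\<forall>y. \<exists>m\<in>C. y - xs m \<in> U" using C(3) unfolding Ob_def by (auto simp: algebra_simps)
  ultimately show ?thesis by blast
qed

definition Ssum :: "('g \<Rightarrow> complex) \<Rightarrow> nat \<Rightarrow> 'g \<Rightarrow> complex" where
  "Ssum g i x = (\<Sum>j<i. g (x + xs (int j)))"

lemma xs_Suc: "xs (int (Suc j)) = xs (int j) + x1"
  using zmul_succ[of "int j" x1] by (simp add: add.commute)

lemma xs_Suc'[simp]: "xs (1 + int j) = xs (int j) + x1"
  using zmul_succ[of "int j" x1] by (simp add: add.commute)

lemma Suc_nz: "(1 + complex_of_nat n) \<noteq> 0"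
  by (metis add.commute of_nat_Suc of_nat_neq_0)

lemma Ssum_shift: "Ssum g i (x + x1) - Ssum g i x = g (x + xs (int i)) - g x"
proof (induction i)
  case 0 then show ?case by (simp add: Ssum_def)
next
  case (Suc i)
  have "Ssum g (Suc i) (x + x1) - Ssum g (Suc i) x
     = (Ssum g i (x + x1) - Ssum g i x) + g (x + x1 + xs (int i)) - g (x + xs (int i))"
    by (simp add: Ssum_def)
  also have "x + x1 + xs (int i) = x + xs (int (Suc i))" by (simp add: xs_Suc algebra_simps)
  finally show ?case using Suc by simp
qed

lemma Ssum_cont: "continuous_on UNIV g \<Longrightarrow> continuous_on UNIV (Ssum g i)"
  unfolding Ssum_def by (intro continuous_intros cont_transl)

definition Aavg :: "('g \<Rightarrow> complex) \<Rightarrow> nat \<Rightarrow> 'g \<Rightarrow> complex" where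
  "Aavg g n x = Ssum g (Suc n) x / of_nat (Suc n)"

definition Hcob :: "('g \<Rightarrow> complex) \<Rightarrow> nat \<Rightarrow> 'g \<Rightarrow> complex" where
  "Hcob g n x = - (\<Sum>i<Suc n. Ssum g i x) / of_nat (Suc n)"

lemma Hcob_cont: "continuous_on UNIV g \<Longrightarrow> continuous_on UNIV (Hcob g n)"
  unfolding Hcob_def using Suc_nz[of n] by (intro continuous_intros Ssum_cont) auto

lemma Hcob_shift: "Hcob g n (x + x1) - Hcob g n x = g x - Aavg g n x"
proof -
  have "(\<Sum>i<Suc n. Ssum g i (x + x1)) - (\<Sum>i<Suc n. Ssum g i x) = (\<Sum>i<Suc n. g (x + xs (int i)) - g x)"
    by (subst sum_subtractf[symmetric]) (simp only: Ssum_shift)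
  also have "\<dots> = Ssum g (Suc n) x - of_nat (Suc n) * g x"
    by (simp add: sum_subtractf Ssum_def)
  finally have e: "(\<Sum>i<Suc n. Ssum g i (x + x1)) - (\<Sum>i<Suc n. Ssum g i x) = Ssum g (Suc n) x - of_nat (Suc n) * g x" .
  have "Hcob g n (x + x1) - Hcob g n x = (- (\<Sum>i<Suc n. Ssum g i (x + x1)) - - (\<Sum>i<Suc n. Ssum g i x)) / of_nat (Suc n)"
    unfolding Hcob_def by (rule diff_divide_distrib[symmetric])
  also have "\<dots> = - ((\<Sum>i<Suc n. Ssum g i (x + x1)) - (\<Sum>i<Suc n. Ssum g i x)) / of_nat (Suc n)"
    by (simp only: minus_diff_minus minus_diff_eq)
  also have "\<dots> = g x - Aavg g n x" unfolding e Aavg_def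
    by (simp add: field_simps del: of_nat_Suc)
  finally show ?thesis .
qed

lemma Aavg_bound:
  assumes B: "\<And>x. cmod (g x) \<le> B"
  shows "cmod (Aavg g n x) \<le> B"
proof -
  have "cmod (Ssum g (Suc n) x) \<le> (\<Sum>j<Suc n. cmod (g (x + xs (int j))))"
    unfolding Ssum_def by (rule norm_sum)
  also have "\<dots> \<le> (\<Sum>j<Suc n. B)" by (intro sum_mono B)
  finally have "cmod (Ssum g (Suc n) x) \<le> of_nat (Suc n) * B" by simp
  then show ?thesis unfolding Aavg_def by (simp add: norm_divide field_simps del: of_nat_Suc)
qed

lemma Aavg_shift:
  assumes B: "\<And>x. cmod (g x) \<le> B"
  shows "cmod (Aavg g n (x + x1) - Aavg g n x) \<le> 2 * B / of_nat (Suc n)"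
proof -
  have "Aavg g n (x + x1) - Aavg g n x = (Ssum g (Suc n) (x + x1) - Ssum g (Suc n) x) / of_nat (Suc n)"
    unfolding Aavg_def by (rule diff_divide_distrib[symmetric])
  also have "\<dots> = (g (x + xs (int (Suc n))) - g x) / of_nat (Suc n)"
    by (simp only: Ssum_shift)
  finally have "Aavg g n (x + x1) - Aavg g n x = (g (x + xs (int (Suc n))) - g x) / of_nat (Suc n)" .
  moreover have "cmod (g (x + xs (int (Suc n))) - g x) \<le> 2 * B"
    using norm_triangle_ineq4[of "g (x + xs (int (Suc n)))" "g x"] B[of x] B[of "x + xs (int (Suc n))"] by linarith
  ultimately show ?thesis by (simp add: norm_divide divide_right_mono del: of_nat_Suc)
qed

lemma orbit_walk:
  fixes f :: "'g \<Rightarrow> complex"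
  assumes C: "\<And>x. cmod (f (x + x1) - f x) \<le> C"
  shows "cmod (f (xs m) - f 0) \<le> \<bar>of_int m\<bar> * C"
proof -
  have pos: "cmod (f (xs (int k)) - f 0) \<le> of_nat k * C" for k
  proof (induction k)
    case 0 then show ?case by simp
  next
    case (Suc k)
    have "cmod (f (xs (int (Suc k))) - f 0) \<le> cmod (f (xs (int k) + x1) - f (xs (int k))) + cmod (f (xs (int k)) - f 0)"
      using norm_triangle_ineq[of "f (xs (int k) + x1) - f (xs (int k))" "f (xs (int k)) - f 0"] by (simp add: xs_Suc)
    also have "\<dots> \<le> C + of_nat k * C" using C Suc by (intro add_mono) auto
    finally show ?case by (simp add: algebra_simps)
  qed
  have neg: "cmod (f (xs (- int k)) - f 0) \<le> of_nat k * C" for k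
  proof (induction k)
    case 0 then show ?case by simp
  next
    case (Suc k)
    have e: "xs (- int (Suc k)) + x1 = xs (- int k)" using zmul_succ[of "- int (Suc k)" x1] by simp
    have "f (xs (- int (Suc k))) - f 0 = - (f (xs (- int (Suc k)) + x1) - f (xs (- int (Suc k)))) + (f (xs (- int k)) - f 0)"
      using e by simp
    then have "cmod (f (xs (- int (Suc k))) - f 0) \<le> cmod (- (f (xs (- int (Suc k)) + x1) - f (xs (- int (Suc k))))) + cmod (f (xs (- int k)) - f 0)"
      by (metis norm_triangle_ineq)
    then have "cmod (f (xs (- int (Suc k))) - f 0) \<le> cmod (f (xs (- int (Suc k)) + x1) - f (xs (- int (Suc k)))) + cmod (f (xs (- int k)) - f 0)"
      by (simp only: norm_minus_cancel)
    also have "\<dots> \<le> C + of_nat k * C" using C Suc by (intro add_mono) auto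
    finally show ?case by (simp add: algebra_simps)
  qed
  show ?thesis
  proof (cases "0 \<le> m")
    case True
    then have "m = int (nat m)" by simp
    then show ?thesis using pos[of "nat m"] True by (metis of_int_of_nat_eq abs_of_nonneg of_nat_0_le_iff)
  next
    case False
    then have "m = - int (nat (-m))" by simp
    then show ?thesis using neg[of "nat (-m)"] False by (metis abs_minus_cancel of_int_minus of_int_of_nat_eq abs_of_nonneg of_nat_0_le_iff)
  qed
qed

lemma osc_small:
  fixes g :: "'g \<Rightarrow> complex"
  assumes gc: "continuous_on UNIV g" and B: "\<And>x. cmod (g x) \<le> B" and e: "0 < e"
  shows "\<exists>N. \<forall>n\<ge>N. \<forall>y. cmod (Aavg g n y - Aavg g n 0) \<le> e"
proof -
  have B0: "0 \<le> B" using B[of 0] norm_ge_zero order_trans by blast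
  obtain U where U: "open U" "0 \<in> U" "\<And>y u. u \<in> U \<Longrightarrow> cmod (g (y + u) - g y) < e / 2"
    using unif_cont[OF gc, of "e/2"] e by auto
  obtain M where M: "\<And>y. \<exists>m. \<bar>m\<bar> \<le> int M \<and> y - xs m \<in> U" using orbit_cover[OF U(1,2)] by blast
  obtain N :: nat where N: "4 * B * real M / e < real N" using reals_Archimedean2 by blast
  have "cmod (Aavg g n y - Aavg g n 0) \<le> e" if n: "n \<ge> N" for n y
  proof -
    obtain m where m: "\<bar>m\<bar> \<le> int M" "y - xs m \<in> U" using M by blast
    define u where "u = y - xs m"
    have y: "y = xs m + u" unfolding u_def by simp
    have t1: "cmod (Aavg g n y - Aavg g n (xs m)) \<le> e / 2"
    proof -
      have eqA: "Aavg g n y - Aavg g n (xs m) = (\<Sum>j<Suc n. g ((xs m + xs (int j)) + u) - g (xs m + xs (int j))) / of_nat (Suc n)"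
        unfolding Aavg_def Ssum_def y by (simp add: diff_divide_distrib sum_subtractf algebra_simps del: of_nat_Suc)
      have uU: "u \<in> U" using m(2) u_def by simp
      have each: "cmod (g ((xs m + xs (int j)) + u) - g (xs m + xs (int j))) \<le> e / 2" for j
        using U(3)[OF uU, of "xs m + xs (int j)"] by simp
      have "cmod (\<Sum>j<Suc n. g ((xs m + xs (int j)) + u) - g (xs m + xs (int j))) \<le> (\<Sum>j<Suc n. e / 2)"
        by (rule order_trans[OF norm_sum sum_mono]) (rule each)
      then show ?thesis unfolding eqA by (simp add: norm_divide field_simps del: of_nat_Suc)
    qed
    have t2: "cmod (Aavg g n (xs m) - Aavg g n 0) \<le> e / 2"
    proof -
      have "cmod (Aavg g n (xs m) - Aavg g n 0) \<le> \<bar>of_int m\<bar> * (2 * B / of_nat (Suc n))"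
        by (rule orbit_walk) (rule Aavg_shift[OF B])
      also have "\<dots> \<le> real M * (2 * B / of_nat (Suc n))"
        using m(1) B0 by (intro mult_right_mono) auto
      also have "\<dots> \<le> e / 2"
      proof -
        have "4 * B * real M / e < real (Suc n)" using N n by simp
        then have "4 * B * real M < e * real (Suc n)" using e by (simp add: field_simps)
        then show ?thesis by (simp add: field_simps del: of_nat_Suc)
      qed
      finally show ?thesis .
    qed
    have "cmod (Aavg g n y - Aavg g n 0) \<le> cmod (Aavg g n y - Aavg g n (xs m)) + cmod (Aavg g n (xs m) - Aavg g n 0)"
      by (rule norm_diff_triangle_le[where y="Aavg g n (xs m)"]) simp_all
    then show ?thesis using t1 t2 by simp
  qed
  then show ?thesis by blast
qed

lemma coboundary:
  fixes g :: "'g \<Rightarrow> complex"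
  assumes gc: "continuous_on UNIV g"
  shows "\<exists>c. \<forall>e>0. \<exists>h. continuous_on UNIV h \<and> (\<forall>x. cmod (h (x + x1) - h x - (g x - c)) \<le> e)"
proof -
  obtain B where B: "\<And>x. cmod (g x) \<le> B" using cont_bounded[OF gc] by blast
  have "bounded (range (\<lambda>n. Aavg g n 0))"
    unfolding bounded_iff using Aavg_bound[where g=g, OF B] by (intro exI[of _ B]) auto
  then obtain c r where r: "strict_mono r" and lim: "((\<lambda>n. Aavg g n 0) \<circ> r) \<longlonglongrightarrow> c"
    using bounded_imp_convergent_subsequence by blast
  have "\<exists>h. continuous_on UNIV h \<and> (\<forall>x. cmod (h (x + x1) - h x - (g x - c)) \<le> e)" if e: "0 < e" for e
  proof -
    obtain N where N: "\<And>n y. n \<ge> N \<Longrightarrow> cmod (Aavg g n y - Aavg g n 0) \<le> e / 2"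
      using osc_small[OF gc B, of "e/2"] e by auto
    obtain K where K: "\<And>k. k \<ge> K \<Longrightarrow> norm (((\<lambda>n. Aavg g n 0) \<circ> r) k - c) < e / 2"
      using LIMSEQ_D[OF lim, of "e/2"] e by auto
    define n where "n = r (max N K)"
    have nN: "n \<ge> N" unfolding n_def using seq_suble[OF r, of "max N K"] by simp
    have nK: "cmod (Aavg g n 0 - c) < e / 2" unfolding n_def using K[of "max N K"] by simp
    have "cmod (Hcob g n (x + x1) - Hcob g n x - (g x - c)) \<le> e" for x
    proof -
      have "Hcob g n (x + x1) - Hcob g n x - (g x - c) = (Aavg g n 0 - Aavg g n x) - (Aavg g n 0 - c)"
        using Hcob_shift[of g n x] by simp
      also have "cmod \<dots> \<le> cmod (Aavg g n 0 - Aavg g n x) + cmod (Aavg g n 0 - c)"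
        by (rule norm_triangle_ineq4)
      also have "\<dots> \<le> e / 2 + e / 2"
        using N[OF nN, of x] nK by (simp add: norm_minus_commute)
      finally show ?thesis by simp
    qed
    then show ?thesis using Hcob_cont[OF gc] by blast
  qed
  then show ?thesis by blast
qed

end



definition schur :: "(int \<Rightarrow> complex) \<Rightarrow> mat \<Rightarrow> mat" where
  "schur T b = (\<lambda>l k. (T l - T k) * b l k)"

lemma Lcomm_schur: "Lcomm b = schur of_int b"
  by (simp add: Lcomm_def schur_def fun_eq_iff)

lemma banded_schur: "banded N a \<Longrightarrow> banded N (schur T a)"
  unfolding banded_def schur_def by auto

lemma schur_mmul:
  assumes "banded N a" "banded M b"
  shows "schur T (mmul a b) = madd (mmul (schur T a) b) (mmul a (schur T b))"
proof (intro ext)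
  fix l k
  have "schur T (mmul a b) l k = (\<Sum>j\<in>{l - int N..l + int N}. (T l - T k) * (a l j * b j k))"
    unfolding schur_def mmul_band_left[OF assms(1)] by (simp add: sum_distrib_left)
  also have "\<dots> = (\<Sum>j\<in>{l - int N..l + int N}. schur T a l j * b j k + a l j * schur T b j k)"
    by (rule sum.cong) (auto simp: schur_def algebra_simps)
  also have "\<dots> = madd (mmul (schur T a) b) (mmul a (schur T b)) l k"
    unfolding madd_def mmul_band_left[OF assms(1)] mmul_band_left[OF banded_schur[OF assms(1)]]
    by (simp add: sum.distrib)
  finally show "schur T (mmul a b) l k = madd (mmul (schur T a) b) (mmul a (schur T b)) l k" .
qed

lemma schur_madd: "schur T (madd a b) = madd (schur T a) (schur T b)"
  by (simp add: schur_def madd_def fun_eq_iff algebra_simps)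
lemma schur_msc: "schur T (msc c a) = msc c (schur T a)"
  by (simp add: schur_def msc_def fun_eq_iff algebra_simps)

definition dcomb :: "(mat \<Rightarrow> mat) \<Rightarrow> complex \<Rightarrow> (mat \<Rightarrow> mat) \<Rightarrow> (mat \<Rightarrow> mat) \<Rightarrow> mat \<Rightarrow> mat" where
  "dcomb d1 c d2 d3 = (\<lambda>b l k. d1 b l k - c * d2 b l k - d3 b l k)"

lemma mmul_lin_right:
  assumes "banded N b"
  shows "mmul (\<lambda>l k. X l k - c * Y l k - Z l k) b l k = mmul X b l k - c * mmul Y b l k - mmul Z b l k"
  unfolding mmul_band_right[OF assms]
  by (simp add: sum_subtractf sum_distrib_left sum.distrib algebra_simps)

lemma mmul_lin_left:
  assumes "banded N a"
  shows "mmul a (\<lambda>l k. X l k - c * Y l k - Z l k) l k = mmul a X l k - c * mmul a Y l k - mmul a Z l k"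
  unfolding mmul_band_left[OF assms]
  by (simp add: sum_subtractf sum_distrib_left sum.distrib algebra_simps)

lemma derivation_dcomb:
  assumes bd: "\<And>a. a \<in> A \<Longrightarrow> \<exists>N. banded N a"
    and d1: "derivation_on A d1" and d2: "derivation_on A d2" and d3: "derivation_on A d3"
  shows "derivation_on A (dcomb d1 c d2 d3)"
  unfolding derivation_on_def
proof (intro conjI ballI allI)
  fix a b assume a: "a \<in> A" and b: "b \<in> A"
  show "dcomb d1 c d2 d3 (madd a b) = madd (dcomb d1 c d2 d3 a) (dcomb d1 c d2 d3 b)"
    using d1 d2 d3 a b unfolding derivation_on_def dcomb_def by (simp add: madd_def fun_eq_iff algebra_simps)
  obtain N M where N: "banded N a" and M: "banded M b" using bd a b by blast
  show "dcomb d1 c d2 d3 (mmul a b) = madd (mmul (dcomb d1 c d2 d3 a) b) (mmul a (dcomb d1 c d2 d3 b))"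
  proof (intro ext)
    fix l k
    have e1: "d1 (mmul a b) = madd (mmul (d1 a) b) (mmul a (d1 b))" using d1 a b unfolding derivation_on_def by blast
    have e2: "d2 (mmul a b) = madd (mmul (d2 a) b) (mmul a (d2 b))" using d2 a b unfolding derivation_on_def by blast
    have e3: "d3 (mmul a b) = madd (mmul (d3 a) b) (mmul a (d3 b))" using d3 a b unfolding derivation_on_def by blast
    show "dcomb d1 c d2 d3 (mmul a b) l k = madd (mmul (dcomb d1 c d2 d3 a) b) (mmul a (dcomb d1 c d2 d3 b)) l k"
      unfolding dcomb_def madd_def mmul_lin_right[OF M] mmul_lin_left[OF N] e1 e2 e3
      by (simp add: madd_def algebra_simps)
  qed
next
  fix c' a assume a: "a \<in> A"
  show "dcomb d1 c d2 d3 (msc c' a) = msc c' (dcomb d1 c d2 d3 a)"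
    using d1 d2 d3 a unfolding derivation_on_def dcomb_def by (simp add: msc_def fun_eq_iff algebra_simps)
qed

lemma kill_lemma:
  fixes x :: complex and n :: int
  assumes "n \<noteq> 0" "\<And>\<theta>::real. exp (\<i> * of_real \<theta> * of_int n) * x = x"
  shows "x = 0"
proof -
  have "exp (\<i> * of_real (pi / of_int n) * of_int n) = exp (\<i> * of_real pi)"
    using assms(1) by (simp add: field_simps)
  also have "\<dots> = -1" by (simp add: exp_Euler)
  finally have "- x = x" using assms(2)[of "pi / of_int n"] by simp
  then show ?thesis by simp
qed

lemma rho_V: "rho \<theta> Vop = msc (exp (\<i> * of_real \<theta>)) Vop"
  by (auto simp: rho_def Vop_def msc_def fun_eq_iff)

lemma rho_Mop: "rho \<theta> (Mop x1 f) = Mop x1 f"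
  by (auto simp: rho_def Mop_def fun_eq_iff)

lemma Mop_add: "Mop x1 (\<lambda>x. f x + g x) = madd (Mop x1 f) (Mop x1 g)"
  by (auto simp: Mop_def madd_def fun_eq_iff)
lemma Mop_scal: "Mop x1 (\<lambda>x. c * f x) = msc c (Mop x1 f)"
  by (auto simp: Mop_def msc_def fun_eq_iff)
lemma Mop_mul: "Mop x1 (\<lambda>x. f x * g x) = mmul (Mop x1 f) (Mop x1 g)"
  by (auto simp: mmul_Mop_left fun_eq_iff) (auto simp: Mop_def)
lemma Mop_zero: "Mop x1 (\<lambda>x. 0) = msc 0 Vop"
  by (auto simp: Mop_def msc_def fun_eq_iff)
lemma madj_Mop: "madj (Mop x1 f) = Mop x1 (\<lambda>x. cnj (f x))"
  by (auto simp: Mop_def madj_def fun_eq_iff)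

lemma zmul_succ': "zmul (l + 1) x1 = zmul l x1 + x1" by (rule zmul_succ)
lemma zmul_pred: "zmul (l - 1) x1 + x1 = zmul l x1" using zmul_succ[of "l - 1" x1] by simp

lemma Mop_shift: "Mop x1 (\<lambda>x. f (x + x1)) = mmul Vinv (mmul (Mop x1 f) Vop)"
  apply (rule ext)+
  apply (simp only: mmul_Vinv_left mmul_V_right mmul_Mop_left)
  apply (auto simp: Vop_def Mop_def zmul_succ')
  done

lemma Mop_V_comm: "mmul (Mop x1 f) Vop = mmul Vop (Mop x1 (\<lambda>x. f (x + x1)))"
  apply (rule ext)+
  apply (simp only: mmul_V_left mmul_V_right mmul_Mop_left)
  apply (auto simp: Vop_def Mop_def zmul_succ' zmul_pred)
  done

lemma Mop_sum_Bpoly: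
  assumes "finite S" "S \<subseteq> Collect character"
  shows "Mop x1 (\<lambda>x. \<Sum>ch\<in>S. c ch * ch x) \<in> Bpoly x1"
  using assms
proof (induction S rule: finite_induct)
  case empty
  show ?case using Mop_zero[of x1] by (simp add: Bpoly.scal Bpoly.gen_V)
next
  case (insert a S)
  have "Mop x1 (\<lambda>x. \<Sum>ch\<in>insert a S. c ch * ch x) = madd (msc (c a) (Mop x1 a)) (Mop x1 (\<lambda>x. \<Sum>ch\<in>S. c ch * ch x))"
    using insert(1,2) by (simp add: Mop_add[symmetric] Mop_scal[symmetric])
  moreover have "character a" using insert(4) by auto
  ultimately show ?case using insert by (auto intro!: Bpoly.add Bpoly.scal Bpoly.gen_M)
qed

lemma Fspan_Bpoly: "f \<in> Fspan \<Longrightarrow> Mop x1 f \<in> Bpoly x1"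
  unfolding Fspan_def using Mop_sum_Bpoly by blast

lemma Fspan_cont: "f \<in> Fspan \<Longrightarrow> continuous_on UNIV f"
  unfolding Fspan_def character_def by (auto intro!: continuous_intros)

lemma character_Fspan: "character ch \<Longrightarrow> ch \<in> Fspan"
  unfolding Fspan_def by (rule CollectI, rule exI[of _ "{ch}"], rule exI[of _ "\<lambda>_. 1"]) auto

lemma character_cnj: "character ch \<Longrightarrow> character (\<lambda>x. cnj (ch x))"
  unfolding character_def by (auto intro!: continuous_intros)

lemma I_Mop: "mmul Vop Vinv = Mop (0::int) (\<lambda>_. 1)"
  apply (rule ext)+
  apply (simp only: mmul_V_left)
  apply (auto simp: Vinv_def Mop_def)
  done

lemma mmul_I_right: "mmul X (mmul Vop Vinv) = X"
  unfolding I_Mop by (simp add: mmul_Mop_right fun_eq_iff)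
lemma mmul_I_left: "mmul (mmul Vop Vinv) X = X"
  unfolding I_Mop by (simp add: mmul_Mop_left fun_eq_iff)

lemma I_Bpoly: "mmul Vop Vinv \<in> Bpoly x1"
  by (intro Bpoly.mul Bpoly.gen_V Bpoly.gen_Vinv)

lemma der_I_zero:
  assumes "derivation_on (Bpoly x1) d"
  shows "d (mmul Vop Vinv) = mzero"
proof -
  let ?I = "mmul Vop Vinv"
  have "d (mmul ?I ?I) = madd (mmul (d ?I) ?I) (mmul ?I (d ?I))"
    using assms I_Bpoly unfolding derivation_on_def by blast
  then have "d ?I = madd (d ?I) (d ?I)" by (simp add: mmul_I_right mmul_I_left)
  then show ?thesis by (simp add: madd_def mzero_def fun_eq_iff)
qed

lemma der_Vinv_zero:
  assumes "derivation_on (Bpoly x1) d" "d Vop = mzero"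
  shows "d Vinv = mzero"
proof -
  have "d (mmul Vop Vinv) = madd (mmul (d Vop) Vinv) (mmul Vop (d Vinv))"
    using assms Bpoly.gen_V Bpoly.gen_Vinv unfolding derivation_on_def by blast
  then have "madd mzero (mmul Vop (d Vinv)) = mzero"
    using der_I_zero[OF assms(1)] assms(2) by simp
  then have "mmul Vop (d Vinv) = mzero"
    by (simp add: madd_def mzero_def fun_eq_iff)
  then have "d Vinv (l + 1 - 1) k = 0" for l k
    by (metis mmul_V_left mzero_def)
  then show ?thesis by (simp add: mzero_def fun_eq_iff)
qed

lemma delta_partial_unique:
  assumes d1: "is_delta_partial x1 D d1" and d2: "is_delta_partial x1 D d2"
  shows "\<forall>b\<in>Bpoly x1. d1 b = d2 b"
proof -
  have der1: "derivation_on (Bpoly x1) d1" and V1: "d1 Vop = mzero" and M1: "\<forall>f\<in>Fspan. d1 (Mop x1 f) = Mop x1 (D f)"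
    using d1 unfolding is_delta_partial_def by auto
  have der2: "derivation_on (Bpoly x1) d2" and V2: "d2 Vop = mzero" and M2: "\<forall>f\<in>Fspan. d2 (Mop x1 f) = Mop x1 (D f)"
    using d2 unfolding is_delta_partial_def by auto
  have Vi: "d1 Vinv = d2 Vinv" using der_Vinv_zero[OF der1 V1] der_Vinv_zero[OF der2 V2] by simp
  have madjV: "madj Vop = Vinv" by (auto simp: Vinv_def Vop_def madj_def fun_eq_iff)
  have madjVi: "madj Vinv = Vop" by (auto simp: Vinv_def Vop_def madj_def fun_eq_iff)
  have "a \<in> Bpoly x1 \<Longrightarrow> d1 a = d2 a \<and> d1 (madj a) = d2 (madj a)" for a
  proof (induction rule: Bpoly.induct)
    case gen_V then show ?case using V1 V2 Vi madjV by simp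
  next
    case gen_Vinv then show ?case using V1 V2 Vi madjVi by simp
  next
    case (gen_M ch)
    then have "ch \<in> Fspan" "(\<lambda>x. cnj (ch x)) \<in> Fspan" using character_Fspan character_cnj by auto
    then show ?case using M1 M2 madj_Mop by metis
  next
    case (add a b)
    have "madj (madd a b) = madd (madj a) (madj b)" by (simp add: madj_def madd_def fun_eq_iff)
    then show ?case using add der1 der2 Bpoly.adj unfolding derivation_on_def by metis
  next
    case (scal a c)
    have "madj (msc c a) = msc (cnj c) (madj a)" by (simp add: madj_def msc_def fun_eq_iff)
    then show ?case using scal der1 der2 Bpoly.adj unfolding derivation_on_def by metis
  next
    case (mul a b)
    have "madj (mmul a b) = mmul (madj b) (madj a)"
      by (simp add: madj_def mmul_def fun_eq_iff mult.commute flip: infsum_cnj)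
    then show ?case using mul der1 der2 Bpoly.adj unfolding derivation_on_def by metis
  next
    case (adj a)
    have "madj (madj a) = a" by (simp add: madj_def fun_eq_iff)
    then show ?case using adj by simp
  qed
  then show ?thesis by blast
qed

context setting begin

lemma Bpoly_banded: "a \<in> Bpoly x1 \<Longrightarrow> \<exists>N. banded N a"
  using Bpoly_Balg0 Balg0_repr repr_def by blast

lemma schur_derivation: "derivation_on (Bpoly x1) (schur T)"
  unfolding derivation_on_def
  using Bpoly_banded schur_mmul schur_madd schur_msc by blast

lemma Lcomm_derivation: "derivation_on (Bpoly x1) Lcomm"
  using schur_derivation[of of_int] unfolding Lcomm_schur[abs_def] by simp

lemma Lcomm_Bpoly: "a \<in> Bpoly x1 \<Longrightarrow> Lcomm a \<in> Bpoly x1"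
proof (induction rule: Bpoly.induct)
  case gen_V
  have "Lcomm Vop = Vop" by (auto simp: Lcomm_def Vop_def fun_eq_iff)
  then show ?case using Bpoly.gen_V by simp
next
  case gen_Vinv
  have "Lcomm Vinv = msc (-1) Vinv" by (auto simp: Lcomm_def Vinv_def msc_def fun_eq_iff)
  moreover have "msc (-1) Vinv \<in> Bpoly x1" by (intro Bpoly.scal Bpoly.gen_Vinv)
  ultimately show ?case by simp
next
  case (gen_M ch)
  have "Lcomm (Mop x1 ch) = msc 0 (Mop x1 ch)" by (auto simp: Lcomm_def Mop_def msc_def fun_eq_iff)
  moreover have "msc 0 (Mop x1 ch) \<in> Bpoly x1" by (intro Bpoly.scal Bpoly.gen_M gen_M)
  ultimately show ?case by simp
next
  case (add a b) then show ?case unfolding Lcomm_schur schur_madd by (intro Bpoly.add) auto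
next
  case (scal a c) then show ?case unfolding Lcomm_schur schur_msc by (intro Bpoly.scal) auto
next
  case (mul a b)
  obtain N M where "banded N a" "banded M b" using mul(1,2) Bpoly_banded by blast
  then show ?case using mul unfolding Lcomm_schur schur_mmul[OF \<open>banded N a\<close> \<open>banded M b\<close>]
    by (intro Bpoly.add Bpoly.mul) auto
next
  case (adj a)
  have "Lcomm (madj a) = msc (-1) (madj (Lcomm a))" by (auto simp: Lcomm_def madj_def msc_def fun_eq_iff algebra_simps)
  then show ?case using adj by (simp only:) (intro Bpoly.adj Bpoly.scal)
qed

end



lemma walk_int:
  fixes F :: "int \<Rightarrow> complex"
  assumes st: "\<And>i. cmod (F (i+1) - F i) \<le> e"
  shows "cmod (F l - F k) \<le> of_int \<bar>l - k\<bar> * e"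
proof -
  have fwd: "cmod (F (k + int n) - F k) \<le> of_nat n * e" for k n
  proof (induction n)
    case 0 then show ?case by simp
  next
    case (Suc n)
    have kk: "k + int (Suc n) = k + int n + 1" by simp
    have "F (k + int (Suc n)) - F k = (F (k + int n + 1) - F (k + int n)) + (F (k + int n) - F k)"
      unfolding kk by simp
    then have "cmod (F (k + int (Suc n)) - F k) \<le> cmod (F (k + int n + 1) - F (k + int n)) + cmod (F (k + int n) - F k)"
      by (metis norm_triangle_ineq)
    also have "\<dots> \<le> e + of_nat n * e" using st Suc by (intro add_mono) auto
    finally show ?case by (simp add: algebra_simps)
  qed
  show ?thesis
  proof (cases "k \<le> l")
    case True
    have "l = k + int (nat (l - k))" using True by simp
    then have "cmod (F l - F k) \<le> of_nat (nat (l - k)) * e" using fwd[of k "nat (l - k)"] by metis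
    then show ?thesis using True by simp
  next
    case False
    have "k = l + int (nat (k - l))" using False by simp
    then have "cmod (F k - F l) \<le> of_nat (nat (k - l)) * e" using fwd[of l "nat (k - l)"] by metis
    then show ?thesis using False by (simp add: norm_minus_commute abs_minus_commute)
  qed
qed

locale deriv_setting = setting x1 for x1 :: "'g::{ab_group_add,t2_space}" +
  fixes \<delta> :: "mat \<Rightarrow> mat"
  assumes der: "derivation_on (Bpoly x1) \<delta>"
  and rng: "\<delta> ` Bpoly x1 \<subseteq> Bstar x1"
  and inv: "invariant_der x1 \<delta>"
begin

lemma der_add: "a \<in> Bpoly x1 \<Longrightarrow> b \<in> Bpoly x1 \<Longrightarrow> \<delta> (madd a b) = madd (\<delta> a) (\<delta> b)"
  using der unfolding derivation_on_def by blast
lemma der_msc: "a \<in> Bpoly x1 \<Longrightarrow> \<delta> (msc c a) = msc c (\<delta> a)"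
  using der unfolding derivation_on_def by blast
lemma der_mul: "a \<in> Bpoly x1 \<Longrightarrow> b \<in> Bpoly x1 \<Longrightarrow> \<delta> (mmul a b) = madd (mmul (\<delta> a) b) (mmul a (\<delta> b))"
  using der unfolding derivation_on_def by blast

lemma exp_combine: "exp (\<i> * of_real (- \<theta>) * of_int m) * exp (\<i> * of_real \<theta>) = exp (\<i> * of_real \<theta> * of_int (1 - m))"
proof -
  have "\<i> * of_real \<theta> * of_int (1 - m) = \<i> * of_real (- \<theta>) * of_int m + \<i> * of_real \<theta>"
    by (simp add: algebra_simps)
  then show ?thesis by (simp only: exp_add)
qed

lemma dV_supp:
  assumes "l \<noteq> k + 1" shows "\<delta> Vop l k = 0"
proof (rule kill_lemma[of "1 - (l - k)"])
  show "1 - (l - k) \<noteq> 0" using assms by simp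
  fix \<theta> :: real
  have "rho (- \<theta>) (\<delta> (rho \<theta> Vop)) = \<delta> Vop" using inv Bpoly.gen_V unfolding invariant_der_def by blast
  then have "rho (- \<theta>) (msc (exp (\<i> * of_real \<theta>)) (\<delta> Vop)) l k = \<delta> Vop l k"
    unfolding rho_V der_msc[OF Bpoly.gen_V] by simp
  then have "exp (\<i> * of_real (- \<theta>) * of_int (l - k)) * exp (\<i> * of_real \<theta>) * \<delta> Vop l k = \<delta> Vop l k"
    by (simp add: rho_def msc_def mult.assoc)
  then show "exp (\<i> * of_real \<theta> * of_int (1 - (l - k))) * \<delta> Vop l k = \<delta> Vop l k"
    unfolding exp_combine .
qed

lemma dM_diag:
  assumes "Mop x1 f \<in> Bpoly x1" "l \<noteq> k" shows "\<delta> (Mop x1 f) l k = 0"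
proof (rule kill_lemma[of "k - l"])
  show "k - l \<noteq> 0" using assms by simp
  fix \<theta> :: real
  have "rho (- \<theta>) (\<delta> (rho \<theta> (Mop x1 f))) = \<delta> (Mop x1 f)" using inv assms(1) unfolding invariant_der_def by blast
  then have "exp (\<i> * of_real (- \<theta>) * of_int (l - k)) * \<delta> (Mop x1 f) l k = \<delta> (Mop x1 f) l k"
    unfolding rho_Mop by (simp add: rho_def fun_eq_iff)
  moreover have "exp (\<i> * of_real (- \<theta>) * of_int (l - k)) = exp (\<i> * of_real \<theta> * of_int (k - l))"
    by (simp add: algebra_simps)
  ultimately show "exp (\<i> * of_real \<theta> * of_int (k - l)) * \<delta> (Mop x1 f) l k = \<delta> (Mop x1 f) l k" by simp
qed

definition gV :: "'g \<Rightarrow> complex" where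
  "gV = (SOME h. continuous_on UNIV h \<and> (\<forall>l. \<delta> Vop (l+1) l = h (xs l)))"

lemma gV: "continuous_on UNIV gV" "\<And>l. \<delta> Vop (l+1) l = gV (xs l)"
proof -
  have "cdiag (\<delta> Vop)" using rng Bpoly.gen_V Bstar_cdiag by blast
  then have "\<exists>h. continuous_on UNIV h \<and> (\<forall>l. \<delta> Vop (l+1) l = h (xs l))" unfolding cdiag_def by blast
  then have "continuous_on UNIV gV \<and> (\<forall>l. \<delta> Vop (l+1) l = gV (xs l))"
    unfolding gV_def by (rule someI_ex)
  then show "continuous_on UNIV gV" "\<And>l. \<delta> Vop (l+1) l = gV (xs l)" by auto
qed

lemma dV_entry: "\<delta> Vop l k = (if l = k + 1 then gV (xs k) else 0)"
  using dV_supp gV(2)[of k] by auto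

definition DD :: "('g \<Rightarrow> complex) \<Rightarrow> 'g \<Rightarrow> complex" where
  "DD f = (SOME h. continuous_on UNIV h \<and> (\<forall>l. h (xs l) = \<delta> (Mop x1 f) l l))"

lemma DD:
  assumes "Mop x1 f \<in> Bpoly x1"
  shows "continuous_on UNIV (DD f)" "\<And>l. DD f (xs l) = \<delta> (Mop x1 f) l l"
proof -
  have "cdiag (\<delta> (Mop x1 f))" using rng assms Bstar_cdiag by blast
  then obtain h where "continuous_on UNIV h" "\<And>l. \<delta> (Mop x1 f) (l+0) l = h (xs l)" unfolding cdiag_def by blast
  then have "\<exists>h. continuous_on UNIV h \<and> (\<forall>l. h (xs l) = \<delta> (Mop x1 f) l l)" by auto
  then have "continuous_on UNIV (DD f) \<and> (\<forall>l. DD f (xs l) = \<delta> (Mop x1 f) l l)"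
    unfolding DD_def by (rule someI_ex)
  then show "continuous_on UNIV (DD f)" "\<And>l. DD f (xs l) = \<delta> (Mop x1 f) l l" by auto
qed

lemma Mop_shift_Bpoly: "Mop x1 f \<in> Bpoly x1 \<Longrightarrow> Mop x1 (\<lambda>x. f (x + x1)) \<in> Bpoly x1"
  unfolding Mop_shift by (intro Bpoly.mul Bpoly.gen_Vinv Bpoly.gen_V)

lemma DD_phi: "phi_inv_derivation x1 DD"
  unfolding phi_inv_derivation_def
proof (intro conjI ballI allI)
  fix f :: "'g \<Rightarrow> complex" assume f: "f \<in> Fspan"
  have Mf: "Mop x1 f \<in> Bpoly x1" using Fspan_Bpoly[OF f] .
  show "continuous_on UNIV (DD f)" using DD(1)[OF Mf] .
  have Mf': "Mop x1 (\<lambda>x. f (x + x1)) \<in> Bpoly x1" by (rule Mop_shift_Bpoly[OF Mf])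
  show "(\<lambda>x. DD f (x + x1)) = DD (\<lambda>x. f (x + x1))"
  proof (rule dense_eq)
    show "continuous_on UNIV (\<lambda>x. DD f (x + x1))" by (rule cont_transl[OF DD(1)[OF Mf]])
    show "continuous_on UNIV (DD (\<lambda>x. f (x + x1)))" by (rule DD(1)[OF Mf'])
    fix l
    have "\<delta> (mmul (Mop x1 f) Vop) = \<delta> (mmul Vop (Mop x1 (\<lambda>x. f (x + x1))))" by (simp add: Mop_V_comm)
    then have "madd (mmul (\<delta> (Mop x1 f)) Vop) (mmul (Mop x1 f) (\<delta> Vop)) (l+1) l
        = madd (mmul (\<delta> Vop) (Mop x1 (\<lambda>x. f (x + x1)))) (mmul Vop (\<delta> (Mop x1 (\<lambda>x. f (x + x1))))) (l+1) l"
      by (simp add: der_mul[OF Mf Bpoly.gen_V] der_mul[OF Bpoly.gen_V Mf'])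
    then have "\<delta> (Mop x1 f) (l+1) (l+1) + f (xs (l+1)) * \<delta> Vop (l+1) l
        = \<delta> Vop (l+1) l * f (xs l + x1) + \<delta> (Mop x1 (\<lambda>x. f (x + x1))) l l"
      by (simp add: madd_def mmul_V_right mmul_V_left mmul_Mop_left mmul_Mop_right)
    then have "\<delta> (Mop x1 f) (l+1) (l+1) + f (xs l + x1) * \<delta> Vop (l+1) l
        = \<delta> Vop (l+1) l * f (xs l + x1) + \<delta> (Mop x1 (\<lambda>x. f (x + x1))) l l"
      by (simp only: zmul_succ')
    then have "\<delta> (Mop x1 f) (l+1) (l+1) = \<delta> (Mop x1 (\<lambda>x. f (x + x1))) l l"
      by (simp add: mult.commute)
    then show "DD f (xs l + x1) = DD (\<lambda>x. f (x + x1)) (xs l)"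
      using DD(2)[OF Mf, of "l+1"] DD(2)[OF Mf', of l] by (simp add: zmul_succ')
  qed
next
  fix f g :: "'g \<Rightarrow> complex" assume f: "f \<in> Fspan" and g: "g \<in> Fspan"
  have Mf: "Mop x1 f \<in> Bpoly x1" using Fspan_Bpoly[OF f] .
  have Mg: "Mop x1 g \<in> Bpoly x1" using Fspan_Bpoly[OF g] .
  have Mfg: "Mop x1 (\<lambda>x. f x + g x) \<in> Bpoly x1" unfolding Mop_add by (intro Bpoly.add Mf Mg)
  show "DD (\<lambda>x. f x + g x) = (\<lambda>x. DD f x + DD g x)"
  proof (rule dense_eq)
    show "continuous_on UNIV (DD (\<lambda>x. f x + g x))" by (rule DD(1)[OF Mfg])
    show "continuous_on UNIV (\<lambda>x. DD f x + DD g x)" by (intro continuous_intros DD(1) Mf Mg)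
    fix l show "DD (\<lambda>x. f x + g x) (xs l) = DD f (xs l) + DD g (xs l)"
      unfolding DD(2)[OF Mfg] DD(2)[OF Mf] DD(2)[OF Mg] Mop_add der_add[OF Mf Mg] by (simp add: madd_def)
  qed
  have Mfg': "Mop x1 (\<lambda>x. f x * g x) \<in> Bpoly x1" unfolding Mop_mul by (intro Bpoly.mul Mf Mg)
  show "DD (\<lambda>x. f x * g x) = (\<lambda>x. DD f x * g x + f x * DD g x)"
  proof (rule dense_eq)
    show "continuous_on UNIV (DD (\<lambda>x. f x * g x))" by (rule DD(1)[OF Mfg'])
    show "continuous_on UNIV (\<lambda>x. DD f x * g x + f x * DD g x)"
      by (intro continuous_intros DD(1) Mf Mg Fspan_cont f g)
    fix l show "DD (\<lambda>x. f x * g x) (xs l) = DD f (xs l) * g (xs l) + f (xs l) * DD g (xs l)"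
      unfolding DD(2)[OF Mfg'] DD(2)[OF Mf] DD(2)[OF Mg] Mop_mul der_mul[OF Mf Mg]
      by (simp add: madd_def mmul_Mop_left mmul_Mop_right)
  qed
next
  fix c and f :: "'g \<Rightarrow> complex" assume f: "f \<in> Fspan"
  have Mf: "Mop x1 f \<in> Bpoly x1" using Fspan_Bpoly[OF f] .
  have Mcf: "Mop x1 (\<lambda>x. c * f x) \<in> Bpoly x1" unfolding Mop_scal by (intro Bpoly.scal Mf)
  show "DD (\<lambda>x. c * f x) = (\<lambda>x. c * DD f x)"
  proof (rule dense_eq)
    show "continuous_on UNIV (DD (\<lambda>x. c * f x))" by (rule DD(1)[OF Mcf])
    show "continuous_on UNIV (\<lambda>x. c * DD f x)" by (intro continuous_intros DD(1) Mf)
    fix l show "DD (\<lambda>x. c * f x) (xs l) = c * DD f (xs l)"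
      unfolding DD(2)[OF Mcf] DD(2)[OF Mf] Mop_scal der_msc[OF Mf] by (simp add: msc_def)
  qed
qed

lemma coboundary_gV: "\<exists>c. \<forall>e>0. \<exists>h. continuous_on UNIV h \<and> (\<forall>x. cmod (h (x + x1) - h x - (gV x - c)) \<le> e)"
  by (rule coboundary[OF gV(1)])

definition c0 :: complex where
  "c0 = (SOME c. \<forall>e>0. \<exists>h. continuous_on UNIV h \<and> (\<forall>x. cmod (h (x + x1) - h x - (gV x - c)) \<le> e))"

lemma c0: "\<forall>e>0. \<exists>h. continuous_on UNIV h \<and> (\<forall>x. cmod (h (x + x1) - h x - (gV x - c0)) \<le> e)"
  unfolding c0_def by (rule someI_ex[OF coboundary_gV])

definition hseq :: "nat \<Rightarrow> 'g \<Rightarrow> complex" where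
  "hseq j = (SOME h. continuous_on UNIV h \<and> (\<forall>x. cmod (h (x + x1) - h x - (gV x - c0)) \<le> inverse (real (Suc j))))"

lemma hseq: "continuous_on UNIV (hseq j)" "\<And>x. cmod (hseq j (x + x1) - hseq j x - (gV x - c0)) \<le> inverse (real (Suc j))"
proof -
  have "\<exists>h. continuous_on UNIV h \<and> (\<forall>x. cmod (h (x + x1) - h x - (gV x - c0)) \<le> inverse (real (Suc j)))"
    using c0 by simp
  then have "continuous_on UNIV (hseq j) \<and> (\<forall>x. cmod (hseq j (x + x1) - hseq j x - (gV x - c0)) \<le> inverse (real (Suc j)))"
    unfolding hseq_def by (rule someI_ex)
  then show "continuous_on UNIV (hseq j)" "\<And>x. cmod (hseq j (x + x1) - hseq j x - (gV x - c0)) \<le> inverse (real (Suc j))"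
    by auto
qed

definition qq :: "int \<Rightarrow> complex" where "qq i = gV (xs i) - c0"

definition Tpot :: "int \<Rightarrow> complex" where
  "Tpot l = (if 0 \<le> l then (\<Sum>i<nat l. qq (int i)) else - (\<Sum>i<nat (-l). qq (- int i - 1)))"

lemma Tpot_neg: "Tpot (- int (Suc p)) = - (\<Sum>i<Suc p. qq (- int i - 1))"
  unfolding Tpot_def by (simp only: if_False nat_int minus_minus) simp

lemma T_step: "Tpot (l + 1) - Tpot l = qq l"
proof (cases "0 \<le> l")
  case True
  then have "nat (l + 1) = Suc (nat l)" by simp
  then show ?thesis using True by (simp add: Tpot_def)
next
  case False
  define p where "p = nat (- l) - 1"
  have l: "l = - int (Suc p)" using False unfolding p_def by simp
  show ?thesis
  proof (cases p)
    case 0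
    then have "l = -1" using l by simp
    then show ?thesis by (simp add: Tpot_def)
  next
    case (Suc p')
    have a: "l + 1 = - int (Suc p')" using l Suc by simp
    have a2: "l = - int (Suc (Suc p'))" using l Suc by simp
    have "Tpot (l + 1) = - (\<Sum>i<Suc p'. qq (- int i - 1))"
      unfolding a by (rule Tpot_neg)
    moreover have "Tpot l = - (\<Sum>i<Suc (Suc p'). qq (- int i - 1))"
      unfolding a2 by (rule Tpot_neg)
    moreover have "- int (Suc p') - 1 = l" using a by simp
    ultimately show ?thesis by (simp del: of_nat_Suc)
  qed
qed

lemma qq_bounded: "\<exists>B. \<forall>i. cmod (qq i) \<le> B"
proof -
  obtain B where "\<And>x. cmod (gV x) \<le> B" using cont_bounded[OF gV(1)] by blast
  then have "cmod (qq i) \<le> B + cmod c0" for i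
    unfolding qq_def using norm_triangle_ineq4[of "gV (xs i)" c0] by (meson add_right_mono order_trans)
  then show ?thesis by blast
qed

definition dtil :: "mat \<Rightarrow> mat" where "dtil = schur Tpot"

lemma dtil_V: "dtil Vop l k = (if l = k + 1 then gV (xs k) - c0 else 0)"
  using T_step[of k] by (auto simp: dtil_def schur_def Vop_def qq_def)

lemma dtil_Mop: "dtil (Mop x1 f) l l = 0"
  by (simp add: dtil_def schur_def)

lemma Mop_Balg0: "continuous_on UNIV h \<Longrightarrow> Mop x1 h \<in> Balg0 x1"
  by (rule Balg0.gen_M)

lemma mcomm_Balg0: "a \<in> Balg0 x1 \<Longrightarrow> b \<in> Balg0 x1 \<Longrightarrow> mcomm a b \<in> Balg0 x1"
  unfolding mcomm_def msub_eq by (intro Balg0.add Balg0.scal Balg0.mul)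

lemma mcomm_Mop: "mcomm (Mop x1 h) b l k = (h (xs l) - h (xs k)) * b l k"
  by (simp add: mcomm_def msub_def mmul_Mop_left mmul_Mop_right algebra_simps)

lemma dtil_approx:
  assumes b: "b \<in> Bpoly x1"
  shows "mtendsto (\<lambda>j. mcomm (Mop x1 (hseq j)) b) (dtil b)"
proof -
  obtain N where N: "banded N b" using Bpoly_banded[OF b] by blast
  obtain C where C: "\<And>l k. cmod (b l k) \<le> C"
    using repr_entries_bounded[OF Balg0_repr[OF Bpoly_Balg0[OF b]]] by blast
  have C0: "0 \<le> C" using C[of 0 0] norm_ge_zero order_trans by blast
  obtain Bq where Bq: "\<And>i. cmod (qq i) \<le> Bq" using qq_bounded by blast
  have Bq0: "0 \<le> Bq" using Bq[of 0] norm_ge_zero order_trans by blast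
  have "cmod (dtil b l k) \<le> of_nat N * Bq * C" for l k
  proof (cases "\<bar>l - k\<bar> \<le> int N")
    case True
    have "cmod (Tpot l - Tpot k) \<le> of_int \<bar>l - k\<bar> * Bq"
      by (rule walk_int) (simp add: T_step Bq)
    also have "\<dots> \<le> of_nat N * Bq"
      using True Bq0 by (intro mult_right_mono) auto
    finally have "cmod (Tpot l - Tpot k) \<le> of_nat N * Bq" .
    then have "cmod (Tpot l - Tpot k) * cmod (b l k) \<le> of_nat N * Bq * C"
      using C[of l k] Bq0 by (intro mult_mono) auto
    then show ?thesis by (simp add: dtil_def schur_def norm_mult)
  next
    case False
    then have "b l k = 0" using N by (auto simp: banded_def)
    moreover have "0 \<le> of_nat N * Bq * C" using C0 Bq0 by simp
    ultimately show ?thesis by (simp add: dtil_def schur_def)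
  qed
  then have bdt: "bounded_mat (dtil b)"
    using banded_bounded(1)[OF banded_schur[OF N]] unfolding dtil_def by blast
  have bc: "bounded_mat (mcomm (Mop x1 (hseq j)) b)" for j
    by (intro Balg0_bounded mcomm_Balg0 Mop_Balg0 hseq(1) Bpoly_Balg0 b)
  define K where "K = (2 * real N + 1) * (real N * C)"
  have est: "norm (mnorm (msub (mcomm (Mop x1 (hseq j)) b) (dtil b))) \<le> K * inverse (real (Suc j))" for j
  proof -
    let ?e = "inverse (real (Suc j))"
    define E where "E = (\<lambda>i. hseq j (xs i) - Tpot i)"
    have Est: "cmod (E (i + 1) - E i) \<le> ?e" for i
    proof -
      have x: "xs (i+1) = xs i + x1" by (rule zmul_succ')
      have t: "Tpot (i+1) = Tpot i + (gV (xs i) - c0)" using T_step[of i] by (simp add: qq_def algebra_simps)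
      have "E (i + 1) - E i = hseq j (xs i + x1) - hseq j (xs i) - (gV (xs i) - c0)"
        unfolding E_def x t by (simp add: algebra_simps)
      then show ?thesis using hseq(2)[of j "xs i"] by simp
    qed
    have ent: "cmod (msub (mcomm (Mop x1 (hseq j)) b) (dtil b) l k) \<le> real N * C * ?e" for l k
    proof (cases "\<bar>l - k\<bar> \<le> int N")
      case True
      have eq: "msub (mcomm (Mop x1 (hseq j)) b) (dtil b) l k = (E l - E k) * b l k"
        by (simp add: msub_def mcomm_Mop dtil_def schur_def E_def algebra_simps)
      have "cmod (E l - E k) \<le> of_int \<bar>l - k\<bar> * ?e" by (rule walk_int[where F=E, OF Est])
      also have "\<dots> \<le> real N * ?e" using True by (intro mult_right_mono) auto
      finally have "cmod (E l - E k) * cmod (b l k) \<le> real N * ?e * C"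
        using C[of l k] by (intro mult_mono) auto
      then have "cmod ((E l - E k) * b l k) \<le> real N * C * ?e" by (simp only: norm_mult) (simp add: mult_ac)
      then show ?thesis unfolding eq .
    next
      case False
      then have "b l k = 0" using N by (auto simp: banded_def)
      then show ?thesis using C0 by (simp add: msub_def mcomm_Mop dtil_def schur_def)
    qed
    have bnd: "banded N (msub (mcomm (Mop x1 (hseq j)) b) (dtil b))"
      using N unfolding banded_def by (simp add: msub_def mcomm_Mop dtil_def schur_def)
    have "mnorm (msub (mcomm (Mop x1 (hseq j)) b) (dtil b)) \<le> (2 * real N + 1) * (real N * C * ?e)"
      by (rule banded_bounded(2)[OF bnd ent])
    moreover have "0 \<le> mnorm (msub (mcomm (Mop x1 (hseq j)) b) (dtil b))"
      by (intro mnorm_nonneg bounded_msub bc bdt)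
    ultimately show ?thesis by (simp add: K_def algebra_simps)
  qed
  have lim: "(\<lambda>j. K * inverse (real (Suc j))) \<longlonglongrightarrow> 0"
    using tendsto_mult_left[OF LIMSEQ_inverse_real_of_nat, of K] by simp
  have "(\<lambda>j. mnorm (msub (mcomm (Mop x1 (hseq j)) b) (dtil b))) \<longlonglongrightarrow> 0"
    by (rule Lim_null_comparison[OF _ lim]) (intro always_eventually allI est)
  then show ?thesis unfolding mtendsto_def using bdt bc by blast
qed

lemma dtil_Bstar: assumes b: "b \<in> Bpoly x1" shows "dtil b \<in> Bstar x1"
proof -
  have "\<forall>j. mcomm (Mop x1 (hseq j)) b \<in> Balg0 x1"
    by (intro allI mcomm_Balg0 Mop_Balg0 hseq(1) Bpoly_Balg0 b)
  then show ?thesis unfolding Bstar_def using dtil_approx[OF b] by (intro CollectI exI[of _ "\<lambda>j. mcomm (Mop x1 (hseq j)) b"]) blast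
qed

lemma dtil_approx_inner: "approx_inner x1 dtil"
  unfolding approx_inner_def
proof (intro conjI)
  show "dtil ` Bpoly x1 \<subseteq> Bstar x1" using dtil_Bstar by blast
  show "\<exists>y. (\<forall>j. y j \<in> Bstar x1) \<and> (\<forall>b\<in>Bpoly x1. mtendsto (\<lambda>j. mcomm (y j) b) (dtil b))"
    by (rule exI[of _ "\<lambda>j. Mop x1 (hseq j)"]) (auto intro!: Balg0_Bstar Mop_Balg0 hseq(1) dtil_approx)
qed

definition dpart :: "mat \<Rightarrow> mat" where "dpart = dcomb \<delta> c0 Lcomm dtil"

lemma dpart_derivation: "derivation_on (Bpoly x1) dpart"
  unfolding dpart_def dtil_def
  by (rule derivation_dcomb[OF Bpoly_banded der Lcomm_derivation schur_derivation])

lemma dpart_Bstar: assumes b: "b \<in> Bpoly x1" shows "dpart b \<in> Bstar x1"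
proof -
  have "dpart b = madd (\<delta> b) (madd (msc (-c0) (Lcomm b)) (msc (-1) (dtil b)))"
    by (simp add: dpart_def dcomb_def madd_def msc_def fun_eq_iff)
  moreover have "\<delta> b \<in> Bstar x1" using rng b by blast
  moreover have "Lcomm b \<in> Bstar x1" using Lcomm_Bpoly[OF b] Bpoly_Bstar by blast
  moreover have "dtil b \<in> Bstar x1" using dtil_Bstar[OF b] .
  ultimately show ?thesis by (simp add: Bstar_madd Bstar_msc)
qed

lemma dpart_V: "dpart Vop = mzero"
  unfolding dpart_def dcomb_def dV_entry dtil_V Lcomm_def
  by (auto simp: Vop_def mzero_def fun_eq_iff)

lemma dpart_M: assumes f: "f \<in> Fspan" shows "dpart (Mop x1 f) = Mop x1 (DD f)"
proof (intro ext)
  fix l k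
  have Mf: "Mop x1 f \<in> Bpoly x1" by (rule Fspan_Bpoly[OF f])
  show "dpart (Mop x1 f) l k = Mop x1 (DD f) l k"
  proof (cases "l = k")
    case True
    have "dpart (Mop x1 f) k k = \<delta> (Mop x1 f) k k"
      unfolding dpart_def dcomb_def dtil_Mop Lcomm_def by simp
    then show ?thesis using DD(2)[OF Mf, of k] True by (simp add: Mop_def)
  next
    case False
    then show ?thesis using dM_diag[OF Mf False]
      by (simp add: dpart_def dcomb_def Lcomm_def dtil_def schur_def Mop_def)
  qed
qed

lemma dpart_partial: "is_delta_partial x1 DD dpart"
  unfolding is_delta_partial_def
  using dpart_derivation dpart_Bstar dpart_V dpart_M by blast

lemma existence: "decomposition x1 \<delta> c0 DD dtil"
  unfolding decomposition_def
proof (intro conjI exI[of _ dpart])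
  show "phi_inv_derivation x1 DD" by (rule DD_phi)
  show "approx_inner x1 dtil" by (rule dtil_approx_inner)
  show "is_delta_partial x1 DD dpart" by (rule dpart_partial)
  show "\<forall>d'. is_delta_partial x1 DD d' \<longrightarrow> (\<forall>b\<in>Bpoly x1. d' b = dpart b)"
    using delta_partial_unique dpart_partial by blast
  show "\<forall>b\<in>Bpoly x1. \<delta> b = madd (madd (msc c0 (Lcomm b)) (dpart b)) (dtil b)"
    by (simp add: dpart_def dcomb_def madd_def msc_def fun_eq_iff)
qed

end

context setting begin

lemma approx_diag_zero:
  assumes ai: "approx_inner x1 dt" and Mf: "Mop x1 f \<in> Bpoly x1"
  shows "dt (Mop x1 f) l l = 0"
proof -
  obtain y where y: "\<And>b. b \<in> Bpoly x1 \<Longrightarrow> mtendsto (\<lambda>j. mcomm (y j) b) (dt b)"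
    using ai unfolding approx_inner_def by blast
  have z: "mcomm (y j) (Mop x1 f) l l = 0" for j
    by (simp add: mcomm_def msub_def mmul_Mop_left mmul_Mop_right)
  have "cmod (dt (Mop x1 f) l l) \<le> e" if e: "0 < e" for e
  proof -
    obtain J where "\<forall>j\<ge>J. \<forall>l k. cmod (mcomm (y j) (Mop x1 f) l k - dt (Mop x1 f) l k) \<le> e"
      using mtendsto_entries[OF y[OF Mf] e] by blast
    then have "cmod (mcomm (y J) (Mop x1 f) l l - dt (Mop x1 f) l l) \<le> e" by blast
    then show ?thesis using z[of J] by simp
  qed
  then have "cmod (dt (Mop x1 f) l l) \<le> 0" by (rule field_le_epsilon[where y=0, simplified])
  then show ?thesis by simp
qed

lemma decomposition_unique:
  assumes A: "decomposition x1 \<delta> c D dt" and B: "decomposition x1 \<delta> c' D' dt'"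
  shows "c' = c \<and> (\<forall>f\<in>Fspan. D' f = D f) \<and> (\<forall>b\<in>Bpoly x1. dt' b = dt b)"
proof -
  obtain d where phi: "phi_inv_derivation x1 D" and ai: "approx_inner x1 dt" and dp: "is_delta_partial x1 D d"
    and uq: "\<forall>d'. is_delta_partial x1 D d' \<longrightarrow> (\<forall>b\<in>Bpoly x1. d' b = d b)"
    and eq: "\<forall>b\<in>Bpoly x1. \<delta> b = madd (madd (msc c (Lcomm b)) (d b)) (dt b)"
    using A unfolding decomposition_def by blast
  obtain d2 where phi2: "phi_inv_derivation x1 D'" and ai2: "approx_inner x1 dt'" and dp2: "is_delta_partial x1 D' d2"
    and eq2: "\<forall>b\<in>Bpoly x1. \<delta> b = madd (madd (msc c' (Lcomm b)) (d2 b)) (dt' b)"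
    using B unfolding decomposition_def by blast
  have dV: "d Vop = mzero" "d2 Vop = mzero" using dp dp2 unfolding is_delta_partial_def by auto
  have Vd: "dt Vop (l+1) l - dt' Vop (l+1) l = c' - c" for l
  proof -
    have VB: "Vop \<in> Bpoly x1" by (rule Bpoly.gen_V)
    have e1: "\<delta> Vop = madd (madd (msc c (Lcomm Vop)) (d Vop)) (dt Vop)" using eq VB by blast
    have e2: "\<delta> Vop = madd (madd (msc c' (Lcomm Vop)) (d2 Vop)) (dt' Vop)" using eq2 VB by blast
    have LV: "Lcomm Vop (l+1) l = 1" by (simp add: Lcomm_def Vop_def)
    have "\<delta> Vop (l+1) l = c + dt Vop (l+1) l"
      unfolding e1 dV(1) by (simp add: madd_def msc_def LV mzero_def)
    moreover have "\<delta> Vop (l+1) l = c' + dt' Vop (l+1) l"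
      unfolding e2 dV(2) by (simp add: madd_def msc_def LV mzero_def)
    ultimately show ?thesis by (simp add: algebra_simps)
  qed
  have cc: "c' = c"
  proof (rule ccontr)
    assume ne: "c' \<noteq> c"
    define dc where "dc = c' - c"
    have dc0: "0 < cmod dc" using ne by (simp add: dc_def)
    obtain y where yB: "\<And>j. y j \<in> Bstar x1" and y: "mtendsto (\<lambda>j. mcomm (y j) Vop) (dt Vop)"
      using ai Bpoly.gen_V unfolding approx_inner_def by blast
    obtain y' where yB': "\<And>j. y' j \<in> Bstar x1" and y': "mtendsto (\<lambda>j. mcomm (y' j) Vop) (dt' Vop)"
      using ai2 Bpoly.gen_V unfolding approx_inner_def by blast
    obtain J where J: "\<forall>j\<ge>J. \<forall>l k. cmod (mcomm (y j) Vop l k - dt Vop l k) \<le> cmod dc / 4"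
      using mtendsto_entries[OF y, of "cmod dc / 4"] dc0 by auto
    obtain J' where J': "\<forall>j\<ge>J'. \<forall>l k. cmod (mcomm (y' j) Vop l k - dt' Vop l k) \<le> cmod dc / 4"
      using mtendsto_entries[OF y', of "cmod dc / 4"] dc0 by auto
    define j where "j = max J J'"
    have mV: "mcomm Y Vop (l+1) l = Y (l+1) (l+1) - Y l l" for Y l
      by (simp add: mcomm_def msub_def mmul_V_right mmul_V_left)
    define z where "z = (\<lambda>i. y j i i - y' j i i)"
    define F where "F = (\<lambda>i. z i - of_int i * dc)"
    have Fst: "cmod (F (i+1) - F i) \<le> cmod dc / 2" for i
    proof -
      have e1: "cmod ((y j (i+1) (i+1) - y j i i) - dt Vop (i+1) i) \<le> cmod dc / 4"
        using J[rule_format, of j "i+1" i] mV[of "y j" i] unfolding j_def by simp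
      have e2: "cmod ((y' j (i+1) (i+1) - y' j i i) - dt' Vop (i+1) i) \<le> cmod dc / 4"
        using J'[rule_format, of j "i+1" i] mV[of "y' j" i] unfolding j_def by simp
      have "F (i+1) - F i = ((y j (i+1) (i+1) - y j i i) - dt Vop (i+1) i) - ((y' j (i+1) (i+1) - y' j i i) - dt' Vop (i+1) i)"
        using Vd[of i] unfolding F_def z_def dc_def by (simp add: algebra_simps)
      also have "cmod \<dots> \<le> cmod dc / 4 + cmod dc / 4"
        using norm_triangle_ineq4[of "(y j (i+1) (i+1) - y j i i) - dt Vop (i+1) i" "(y' j (i+1) (i+1) - y' j i i) - dt' Vop (i+1) i"] e1 e2
        by linarith
      finally show ?thesis by simp
    qed
    have byy: "bounded_mat (y j)" "bounded_mat (y' j)" using yB yB' Bstar_bounded by auto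
    define K where "K = mnorm (y j) + mnorm (y' j)"
    have zb: "cmod (z i) \<le> K" for i
      unfolding z_def K_def using entry_le_mnorm[OF byy(1), of i i] entry_le_mnorm[OF byy(2), of i i]
        norm_triangle_ineq4[of "y j i i" "y' j i i"] by linarith
    obtain n :: nat where n: "4 * K / cmod dc < real n" using reals_Archimedean2 by blast
    have "cmod (F (int n) - F 0) \<le> of_int \<bar>int n - 0\<bar> * (cmod dc / 2)"
      by (rule walk_int[where F=F, OF Fst])
    then have w: "cmod (F (int n) - F 0) \<le> real n * cmod dc / 2" by simp
    have "of_nat n * dc = (z (int n) - z 0) - (F (int n) - F 0)" unfolding F_def by simp
    then have "cmod (of_nat n * dc) \<le> cmod (z (int n) - z 0) + cmod (F (int n) - F 0)"
      using norm_triangle_ineq4[of "z (int n) - z 0" "F (int n) - F 0"] by simp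
    then have "real n * cmod dc \<le> cmod (z (int n) - z 0) + cmod (F (int n) - F 0)"
      by (simp add: norm_mult)
    also have "\<dots> \<le> 2 * K + real n * cmod dc / 2"
      using zb[of "int n"] zb[of 0] w norm_triangle_ineq4[of "z (int n)" "z 0"] by linarith
    finally have "real n * cmod dc \<le> 4 * K" by simp
    moreover have "4 * K < real n * cmod dc" using n dc0 by (simp add: field_simps)
    ultimately show False by simp
  qed
  have DD: "D' f = D f" if f: "f \<in> Fspan" for f
  proof -
    have Mf: "Mop x1 f \<in> Bpoly x1" by (rule Fspan_Bpoly[OF f])
    have M1: "d (Mop x1 f) = Mop x1 (D f)" and M2: "d2 (Mop x1 f) = Mop x1 (D' f)"
      using dp dp2 f unfolding is_delta_partial_def by auto
    have "D f (xs l) = D' f (xs l)" for l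
    proof -
      have "\<delta> (Mop x1 f) l l = D f (xs l)"
        using eq Mf M1 approx_diag_zero[OF ai Mf, of l] by (simp add: madd_def msc_def Lcomm_def Mop_def)
      moreover have "\<delta> (Mop x1 f) l l = D' f (xs l)"
        using eq2 Mf M2 approx_diag_zero[OF ai2 Mf, of l] by (simp add: madd_def msc_def Lcomm_def Mop_def)
      ultimately show ?thesis by simp
    qed
    moreover have "continuous_on UNIV (D f)" "continuous_on UNIV (D' f)"
      using phi phi2 f unfolding phi_inv_derivation_def by auto
    ultimately show ?thesis using dense_eq[of "D' f" "D f"] by simp
  qed
  have "is_delta_partial x1 D d2"
    using dp2 DD unfolding is_delta_partial_def by auto
  then have dd: "\<forall>b\<in>Bpoly x1. d2 b = d b" using uq by blast
  have "dt' b = dt b" if b: "b \<in> Bpoly x1" for b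
  proof -
    have "madd (madd (msc c (Lcomm b)) (d b)) (dt b) = madd (madd (msc c (Lcomm b)) (d b)) (dt' b)"
      using eq2 b dd cc eq[rule_format, OF b, symmetric] by simp
    then show ?thesis by (simp add: madd_def fun_eq_iff)
  qed
  then show ?thesis using cc DD by blast
qed

end

theorem proposition3p13:
  fixes x1 :: "'g::{ab_group_add, t2_space}" and \<delta> :: "mat \<Rightarrow> mat"
  assumes "compact (UNIV :: 'g set)"
    and "infinite (UNIV :: 'g set)"
    and "continuous_on UNIV (\<lambda>p :: 'g \<times> 'g. fst p + snd p)"
    and "continuous_on UNIV (\<lambda>x :: 'g. - x)"
    and "closure (range (\<lambda>n :: int. zmul n x1)) = UNIV"
    and "derivation_on (Bpoly x1) \<delta>"
    and "\<delta> ` Bpoly x1 \<subseteq> Bstar x1"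
    and "invariant_der x1 \<delta>"
  shows "\<exists>c0 D dt. decomposition x1 \<delta> c0 D dt \<and>
           (\<forall>c0' D' dt'. decomposition x1 \<delta> c0' D' dt' \<longrightarrow>
              c0' = c0 \<and> (\<forall>f\<in>Fspan. D' f = D f) \<and> (\<forall>b\<in>Bpoly x1. dt' b = dt b))"
proof -
  interpret deriv_setting x1 \<delta>
    by unfold_locales (use assms in auto)
  show ?thesis using existence decomposition_unique by blast
qed

end
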